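(* Let $V$ be a real vector space, let $F$ be a geometric mean closed, semiprime $f$-algebra, let $T\colon V\times V\to F$ be a vector semi-inner product, and let $u\in F^+$. Define $\|x\|^T_u:=T(x,x)\boxtimes u$ for $x\in V$. Then for all $x,y\in V$, \[ (\|x+y\|^T_u)^2\le(\|x\|^T_u+\|y\|^T_u)^2-\inf_{\lambda\in\mathbb{R}\setminus\{0\}}\{|\lambda|^{-1}(\|\lambda x-y\|^T_u)^2\}\le(\|x\|^T_u+\|y\|^T_u)^2 \] (where the infimum exists in $F$). Moreover, the equality \[ (\|x+y\|^T_u)^2=(\|x\|^T_u+\|y\|^T_u)^2-\inf_{\lambda\in\mathbb{R}\setminus\{0\}}\{|\lambda|^{-1}(\|\lambda x-y\|^T_u)^2\} \] holds if and only if $T(x,y)u\in F^+$.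
   Context: All vector spaces are over $\mathbb{R}$ and all vector lattices are Archimedean; $F^+=\{x\in F:x\ge0\}$. An $f$-algebra is a vector lattice $F$ with an associative bilinear multiplication (written by juxtaposition, $a^2=aa$) such that $xy\in F^+$ for $x,y\in F^+$, and $\inf\{x,y\}=0$ implies $\inf\{xz,y\}=\inf\{x,yz\}=0$ for all $z\in F^+$. It is semiprime if it has no nonzero nilpotent elements. A vector lattice $F$ is geometric mean closed if $\inf\{\theta u+\theta^{-1}v:\theta\in(0,\infty)\}$ exists in $F$ for all $u,v\in F^+$, and then $u\boxtimes v:=2^{-1}\inf\{\theta u+\theta^{-1}v:\theta\in(0,\infty)\}$. A map $T\colon V\times V\to F$ is a vector semi-inner product if it is bilinear, symmetric ($T(x,y)=T(y,x)$), and satisfies $T(x,x)\ge 0$ for all $x\in V$. *)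

theory Defs
  imports "HOL-Analysis.Analysis"
begin

text \<open>Vector lattices are modelled by the sort {ordered_real_vector, lattice}
  (order compatible with the real vector space structure, plus binary inf/sup);
  the multiplication is the ring multiplication of real_algebra
  (associative and bilinear, no unit, no commutativity assumed).\<close>

definition archimedean_vl :: "'f::{ordered_real_vector, lattice} itself \<Rightarrow> bool" where
  "archimedean_vl _ \<longleftrightarrow>
     (\<forall>x y::'f. 0 \<le> x \<longrightarrow> (\<forall>n::nat. real n *\<^sub>R x \<le> y) \<longrightarrow> x = 0)"

definition f_algebra :: "'f::{real_algebra, ordered_real_vector, lattice} itself \<Rightarrow> bool" where
  "f_algebra TYPE('f) \<longleftrightarrow>
     archimedean_vl TYPE('f) \<and>
     (\<forall>x y::'f. 0 \<le> x \<longrightarrow> 0 \<le> y \<longrightarrow> 0 \<le> x * y) \<and>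
     (\<forall>x y z::'f. inf x y = 0 \<longrightarrow> 0 \<le> z \<longrightarrow> inf (x * z) y = 0 \<and> inf x (y * z) = 0)"

fun mpow :: "'f::times \<Rightarrow> nat \<Rightarrow> 'f" where
  "mpow x 0 = x"
| "mpow x (Suc n) = x * mpow x n"
(* mpow x n = x^(n+1) *)

definition semiprime :: "'f::{real_algebra, ordered_real_vector, lattice} itself \<Rightarrow> bool" where
  "semiprime TYPE('f) \<longleftrightarrow> (\<forall>(x::'f) n. mpow x n = 0 \<longrightarrow> x = 0)"

definition is_glb :: "'a::order set \<Rightarrow> 'a \<Rightarrow> bool" where
  "is_glb S a \<longleftrightarrow> (\<forall>s\<in>S. a \<le> s) \<and> (\<forall>b. (\<forall>s\<in>S. b \<le> s) \<longrightarrow> b \<le> a)"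

definition gm_set :: "'f::ordered_real_vector \<Rightarrow> 'f \<Rightarrow> 'f set" where
  "gm_set u v = {\<theta> *\<^sub>R u + inverse \<theta> *\<^sub>R v | \<theta>::real. 0 < \<theta>}"

definition geometric_mean_closed :: "'f::{ordered_real_vector, lattice} itself \<Rightarrow> bool" where
  "geometric_mean_closed TYPE('f) \<longleftrightarrow>
     (\<forall>u v::'f. 0 \<le> u \<longrightarrow> 0 \<le> v \<longrightarrow> (\<exists>a. is_glb (gm_set u v) a))"

definition gmean :: "'f::ordered_real_vector \<Rightarrow> 'f \<Rightarrow> 'f" (infixl "\<boxtimes>" 70) where
  "u \<boxtimes> v = (1/2) *\<^sub>R (THE a. is_glb (gm_set u v) a)"

definition vector_semi_inner :: "('v::real_vector \<Rightarrow> 'v \<Rightarrow> 'f::{real_algebra, ordered_real_vector}) \<Rightarrow> bool" where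
  "vector_semi_inner T \<longleftrightarrow> bilinear T \<and> (\<forall>x y. T x y = T y x) \<and> (\<forall>x. 0 \<le> T x x)"

definition Tnorm :: "('v \<Rightarrow> 'v \<Rightarrow> 'f::ordered_real_vector) \<Rightarrow> 'f \<Rightarrow> 'v \<Rightarrow> 'f" where
  "Tnorm T u x = T x x \<boxtimes> u"

end

theory Submission
  imports Defs
begin

definition pp :: "'a::{ordered_real_vector,lattice} \<Rightarrow> 'a" where "pp x = sup x 0"
definition nn :: "'a::{ordered_real_vector,lattice} \<Rightarrow> 'a" where "nn x = sup (- x) 0"
definition aa :: "'a::{ordered_real_vector,lattice} \<Rightarrow> 'a" where "aa x = sup x (- x)"

lemma add_inf_l: "(a::'a::{ordered_real_vector,lattice}) + inf b c = inf (a + b) (a + c)"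
proof (rule order.antisym)
  show "a + inf b c \<le> inf (a + b) (a + c)" by (simp add: add_left_mono)
  have "inf (a + b) (a + c) - a \<le> b" using inf_le1[of "a+b" "a+c"] by (simp add: diff_le_eq add.commute)
  moreover have "inf (a + b) (a + c) - a \<le> c" using inf_le2[of "a+b" "a+c"] by (simp add: diff_le_eq add.commute)
  ultimately have "inf (a + b) (a + c) - a \<le> inf b c" by simp
  then show "inf (a + b) (a + c) \<le> a + inf b c" by (metis add.commute diff_le_eq)
qed

lemma add_inf_r: "inf b c + (a::'a::{ordered_real_vector,lattice}) = inf (b + a) (c + a)"
  by (metis add.commute add_inf_l)

lemma add_sup_l: "(a::'a::{ordered_real_vector,lattice}) + sup b c = sup (a + b) (a + c)"
proof (rule order.antisym)
  show "sup (a + b) (a + c) \<le> a + sup b c" by (simp add: add_left_mono)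
  have "b \<le> sup (a + b) (a + c) - a" using sup_ge1[of "a+b" "a+c"] by (simp add: le_diff_eq add.commute)
  moreover have "c \<le> sup (a + b) (a + c) - a" using sup_ge2[of "a+b" "a+c"] by (simp add: le_diff_eq add.commute)
  ultimately have "sup b c \<le> sup (a + b) (a + c) - a" by simp
  then show "a + sup b c \<le> sup (a + b) (a + c)" by (simp add: algebra_simps)
qed

lemma add_sup_r: "sup b c + (a::'a::{ordered_real_vector,lattice}) = sup (b + a) (c + a)"
  by (metis add.commute add_sup_l)

lemma neg_inf: "- inf a (b::'a::{ordered_real_vector,lattice}) = sup (- a) (- b)"
proof (rule order.antisym)
  show "sup (- a) (- b) \<le> - inf a b" by simp
  have "- sup (- a) (- b) \<le> a" using sup_ge1[of "-a" "-b"] by (simp add: minus_le_iff)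
  moreover have "- sup (- a) (- b) \<le> b" using sup_ge2[of "-a" "-b"] by (simp add: minus_le_iff)
  ultimately have "- sup (- a) (- b) \<le> inf a b" by simp
  then show "- inf a b \<le> sup (- a) (- b)" by (metis minus_le_iff)
qed

lemma neg_sup: "- sup a (b::'a::{ordered_real_vector,lattice}) = inf (- a) (- b)"
  by (metis minus_minus neg_inf)

lemma diff_inf_r: "inf b c - (a::'a::{ordered_real_vector,lattice}) = inf (b - a) (c - a)"
  using add_inf_r[of b c "-a"] by (simp only: diff_conv_add_uminus[symmetric])
lemma diff_sup_r: "sup b c - (a::'a::{ordered_real_vector,lattice}) = sup (b - a) (c - a)"
  using add_sup_r[of b c "-a"] by (simp only: diff_conv_add_uminus[symmetric])
lemma diff_sup_l: "(a::'a::{ordered_real_vector,lattice}) - sup b c = inf (a - b) (a - c)"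
proof -
  have "a - sup b c = a + - sup b c" by (rule diff_conv_add_uminus)
  also have "\<dots> = a + inf (-b) (-c)" by (simp only: neg_sup)
  also have "\<dots> = inf (a + -b) (a + -c)" by (rule add_inf_l)
  also have "\<dots> = inf (a - b) (a - c)" by (simp only: diff_conv_add_uminus)
  finally show ?thesis .
qed
lemma diff_inf_l: "(a::'a::{ordered_real_vector,lattice}) - inf b c = sup (a - b) (a - c)"
proof -
  have "a - inf b c = a + - inf b c" by (rule diff_conv_add_uminus)
  also have "\<dots> = a + sup (-b) (-c)" by (simp only: neg_inf)
  also have "\<dots> = sup (a + -b) (a + -c)" by (rule add_sup_l)
  also have "\<dots> = sup (a - b) (a - c)" by (simp only: diff_conv_add_uminus)
  finally show ?thesis .
qed
lemma inf_sup_add: "inf a b + sup a (b::'a::{ordered_real_vector,lattice}) = a + b"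
proof -
  have "sup a b = a + b + sup (- b) (- a)"
    by (simp add: add_sup_l algebra_simps)
  also have "\<dots> = a + b - inf a b" by (simp add: neg_inf sup_commute)
  finally show ?thesis by (simp add: algebra_simps)
qed

lemma half_pos: "0 \<le> s + s \<Longrightarrow> 0 \<le> (s::'a::ordered_real_vector)"
proof -
  assume h: "0 \<le> s + s"
  have "s + s = 2 *\<^sub>R s" by (simp add: scaleR_2)
  with h have "0 \<le> 2 *\<^sub>R s" by simp
  then have "0 \<le> (1/2::real) *\<^sub>R (2 *\<^sub>R s)" by (rule scaleR_nonneg_nonneg[rotated]) simp
  then show ?thesis by simp
qed
lemma pp_ge0[simp]: "0 \<le> pp x" by (simp add: pp_def)
lemma nn_ge0[simp]: "0 \<le> nn x" by (simp add: nn_def)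
lemma le_pp: "x \<le> pp x" by (simp add: pp_def)
lemma pp_eq: "pp x = x + nn (x::'a::{ordered_real_vector,lattice})"
  by (simp add: nn_def pp_def add_sup_l sup_commute)
lemma pp_nn: "pp x - nn x = (x::'a::{ordered_real_vector,lattice})"
  using pp_eq[of x] by simp
lemma pp_plus_nn: "pp x + nn x = sup (pp x) (nn (x::'a::{ordered_real_vector,lattice}))"
proof -
  have "pp x + nn x = sup (x + nn x) (nn x)" by (simp add: pp_def add_sup_r)
  also have "x + nn x = sup 0 x" by (simp add: nn_def add_sup_l)
  finally show ?thesis by (simp add: pp_def sup_commute)
qed
lemma pp_nn_inf: "inf (pp x) (nn (x::'a::{ordered_real_vector,lattice})) = 0"
  using inf_sup_add[of "pp x" "nn x"] pp_plus_nn[of x] by simp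
lemma aa_eq: "aa x = pp x + nn (x::'a::{ordered_real_vector,lattice})"
proof -
  have s0: "sup x (-x) \<ge> 0"
  proof -
    have "x + - x \<le> sup x (-x) + sup x (-x)" by (rule add_mono[OF sup_ge1 sup_ge2])
    then have "0 \<le> sup x (-x) + sup x (-x)" by simp
    then show ?thesis by (rule half_pos)
  qed
  have "pp x + nn x = sup (pp x) (nn x)" by (rule pp_plus_nn)
  also have "\<dots> = sup (sup x 0) (sup (-x) 0)" by (simp only: pp_def nn_def)
  also have "\<dots> = sup (sup x (-x)) 0" by (simp add: sup_assoc sup_left_commute)
  also have "\<dots> = sup x (-x)" using s0 by (rule sup.absorb1)
  finally show ?thesis by (simp add: aa_def)
qed
lemma inf_eq_pp: "inf x y = x - pp (x - (y::'a::{ordered_real_vector,lattice}))"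
proof -
  have "x - pp (x - y) = inf (x - (x - y)) (x - 0)" by (simp only: pp_def diff_sup_l)
  then show ?thesis by (simp add: inf_commute)
qed
lemma sup_eq_pp: "sup x y = y + pp (x - (y::'a::{ordered_real_vector,lattice}))"
  by (simp add: pp_def add_sup_l)
lemma disj_pp: "0 \<le> u \<Longrightarrow> 0 \<le> v \<Longrightarrow> inf u v = 0 \<Longrightarrow> pp (u - v) = (u::'a::{ordered_real_vector,lattice})"
  using sup_eq_pp[of u v] inf_sup_add[of u v] by (simp add: algebra_simps)
lemma disj_nn: "0 \<le> u \<Longrightarrow> 0 \<le> v \<Longrightarrow> inf u v = 0 \<Longrightarrow> nn (u - v) = (v::'a::{ordered_real_vector,lattice})"
  using disj_pp[of v u] by (simp add: nn_def pp_def inf_commute)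
lemma disj_sum_sup: "inf u v = 0 \<Longrightarrow> u + v = sup u (v::'a::{ordered_real_vector,lattice})"
  using inf_sup_add[of u v] by simp
lemma scale_inf: "0 \<le> t \<Longrightarrow> t *\<^sub>R inf a b = inf (t *\<^sub>R a) (t *\<^sub>R (b::'a::{ordered_real_vector,lattice}))"
proof (cases "t = 0")
  case False
  assume t: "0 \<le> t"
  with False have tp: "0 < t" by simp
  show ?thesis
  proof (rule order.antisym)
    show "t *\<^sub>R inf a b \<le> inf (t *\<^sub>R a) (t *\<^sub>R b)" using t by (simp add: scaleR_left_mono)
    have "inverse t *\<^sub>R inf (t *\<^sub>R a) (t *\<^sub>R b) \<le> inf a b"
    proof -
      have "inverse t *\<^sub>R inf (t *\<^sub>R a) (t *\<^sub>R b) \<le> inverse t *\<^sub>R (t *\<^sub>R a)"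
        using tp by (intro scaleR_left_mono) auto
      moreover have "inverse t *\<^sub>R inf (t *\<^sub>R a) (t *\<^sub>R b) \<le> inverse t *\<^sub>R (t *\<^sub>R b)"
        using tp by (intro scaleR_left_mono) auto
      ultimately show ?thesis using tp by simp
    qed
    then have "t *\<^sub>R (inverse t *\<^sub>R inf (t *\<^sub>R a) (t *\<^sub>R b)) \<le> t *\<^sub>R inf a b"
      using t by (rule scaleR_left_mono)
    then show "inf (t *\<^sub>R a) (t *\<^sub>R b) \<le> t *\<^sub>R inf a b" using tp by simp
  qed
qed simp
lemma scale_sup: "0 \<le> t \<Longrightarrow> t *\<^sub>R sup a b = sup (t *\<^sub>R a) (t *\<^sub>R (b::'a::{ordered_real_vector,lattice}))"
proof -
  assume t: "0 \<le> t"
  have "t *\<^sub>R sup a b = - (t *\<^sub>R inf (-a) (-b))" by (simp add: neg_sup[symmetric])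
  also have "\<dots> = - inf (t *\<^sub>R (-a)) (t *\<^sub>R (-b))" using t by (simp only: scale_inf)
  also have "\<dots> = sup (t *\<^sub>R a) (t *\<^sub>R b)" by (simp add: neg_inf)
  finally show ?thesis .
qed
lemma scale_pp: "0 \<le> t \<Longrightarrow> pp (t *\<^sub>R x) = t *\<^sub>R pp (x::'a::{ordered_real_vector,lattice})"
  by (simp add: pp_def scale_sup)
lemma scale_nn: "0 \<le> t \<Longrightarrow> nn (t *\<^sub>R x) = t *\<^sub>R nn (x::'a::{ordered_real_vector,lattice})"
  by (simp add: nn_def scale_sup)
lemma riesz_ineq:
  fixes u v w :: "'a::{ordered_real_vector,lattice}"
  assumes "0 \<le> u" "0 \<le> v" "0 \<le> w"
  shows "inf u (v + w) \<le> inf u v + inf u w"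
proof -
  have "inf u v + inf u w = inf (u + inf u w) (v + inf u w)" by (simp add: add_inf_r)
  also have "u + inf u w = inf (u + u) (u + w)" by (simp add: add_inf_l)
  also have "v + inf u w = inf (v + u) (v + w)" by (simp add: add_inf_l)
  finally have e: "inf u v + inf u w = inf (inf (u + u) (u + w)) (inf (v + u) (v + w))" .
  have "inf u (v + w) \<le> inf (inf (u + u) (u + w)) (inf (v + u) (v + w))"
    using assms by (auto intro!: le_infI intro: order.trans[OF inf_le1] order.trans[OF inf_le2])
  then show ?thesis using e by simp
qed
lemma disj_mono: "0 \<le> u \<Longrightarrow> u \<le> a \<Longrightarrow> 0 \<le> b \<Longrightarrow> inf a b = 0 \<Longrightarrow> inf u (b::'a::{ordered_real_vector,lattice}) = 0"
proof -
  assume h: "0 \<le> u" "u \<le> a" "0 \<le> b" "inf a b = 0"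
  have "inf u b \<le> inf a b" using h by (intro inf_mono) auto
  then show ?thesis using h by (intro order.antisym) auto
qed
lemma disj_add: "0 \<le> a \<Longrightarrow> 0 \<le> b \<Longrightarrow> 0 \<le> c \<Longrightarrow> inf a b = 0 \<Longrightarrow> inf a c = 0 \<Longrightarrow> inf a (b + c) = (0::'a::{ordered_real_vector,lattice})"
  using riesz_ineq[of a b c] by (simp add: order.antisym)
lemma disj_scale: "0 \<le> a \<Longrightarrow> 0 \<le> b \<Longrightarrow> inf a b = 0 \<Longrightarrow> 0 \<le> s \<Longrightarrow> 0 \<le> t \<Longrightarrow> inf (s *\<^sub>R a) (t *\<^sub>R (b::'a::{ordered_real_vector,lattice})) = 0"
proof -
  assume h: "0 \<le> a" "0 \<le> b" "inf a b = 0" "0 \<le> s" "0 \<le> t"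
  let ?m = "max s t"
  have "inf (s *\<^sub>R a) (t *\<^sub>R b) \<le> inf (?m *\<^sub>R a) (?m *\<^sub>R b)"
    using h by (intro inf_mono scaleR_right_mono) auto
  also have "\<dots> = 0" using h scale_inf[of ?m a b] by simp
  moreover have "0 \<le> inf (s *\<^sub>R a) (t *\<^sub>R b)" using h by (simp add: scaleR_nonneg_nonneg)
  ultimately show ?thesis by (intro order.antisym) auto
qed
lemma inf_add_le: "0 \<le> c \<Longrightarrow> inf (a + c) b \<le> inf a b + (c::'a::{ordered_real_vector,lattice})"
proof -
  assume c: "0 \<le> c"
  have "inf (a + c) b \<le> inf (a + c) (b + c)" using c by (intro inf_mono) auto
  then show ?thesis by (simp add: add_inf_r)
qed

lemma pp_mono: "x \<le> y \<Longrightarrow> pp x \<le> pp (y::'a::{ordered_real_vector,lattice})"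
  by (simp add: pp_def sup.coboundedI1)
lemma pp_id: "0 \<le> x \<Longrightarrow> pp x = (x::'a::{ordered_real_vector,lattice})"
  by (simp add: pp_def sup.absorb1)
lemma nn_pp: "nn x = pp (- (x::'a::{ordered_real_vector,lattice}))"
  by (simp add: nn_def pp_def)
lemma aa_ge0[simp]: "0 \<le> aa (x::'a::{ordered_real_vector,lattice})"
  by (simp add: aa_eq add_nonneg_nonneg)
lemma pp_le_aa: "pp x \<le> aa (x::'a::{ordered_real_vector,lattice})"
  by (simp add: aa_eq)
lemma nn_le_aa: "nn x \<le> aa (x::'a::{ordered_real_vector,lattice})"
  by (simp add: aa_eq)
lemma le_aa: "x \<le> aa (x::'a::{ordered_real_vector,lattice})"
  by (simp add: aa_def)
lemma neg_le_aa: "- x \<le> aa (x::'a::{ordered_real_vector,lattice})"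
  by (simp add: aa_def)
lemma aa_neg: "aa (- x) = aa (x::'a::{ordered_real_vector,lattice})"
  by (simp add: aa_def sup_commute)
lemma aa_id: "0 \<le> x \<Longrightarrow> aa x = (x::'a::{ordered_real_vector,lattice})"
proof -
  assume x: "0 \<le> x"
  then have "- x \<le> x" by (meson neg_le_0_iff_le order.trans)
  then show ?thesis by (simp add: aa_def sup.absorb1)
qed
lemma aa_le: "x \<le> y \<Longrightarrow> - x \<le> y \<Longrightarrow> aa x \<le> (y::'a::{ordered_real_vector,lattice})"
  by (simp add: aa_def)
lemma aa_triangle: "aa (x + y) \<le> aa x + aa (y::'a::{ordered_real_vector,lattice})"
proof (rule aa_le)
  show "x + y \<le> aa x + aa y" by (intro add_mono le_aa)
  have "- x + - y \<le> aa x + aa y" by (intro add_mono neg_le_aa)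
  then show "- (x + y) \<le> aa x + aa y" by (simp only: minus_add_distrib)
qed
lemma aa_scale_pos: "0 \<le> c \<Longrightarrow> aa (c *\<^sub>R x) = c *\<^sub>R aa (x::'a::{ordered_real_vector,lattice})"
  by (simp add: aa_def scale_sup)
lemma aa_scale: "aa (c *\<^sub>R x) = \<bar>c\<bar> *\<^sub>R aa (x::'a::{ordered_real_vector,lattice})"
proof (cases "0 \<le> c")
  case True then show ?thesis by (simp add: aa_scale_pos)
next
  case False
  then have "aa (c *\<^sub>R x) = aa ((-c) *\<^sub>R x)" by (metis aa_neg scaleR_minus_left)
  also have "\<dots> = (-c) *\<^sub>R aa x" using False by (intro aa_scale_pos) simp
  finally show ?thesis using False by simp
qed
lemma aa_diff_le: "0 \<le> c \<Longrightarrow> aa (x - c *\<^sub>R y) \<le> aa x + c *\<^sub>R aa (y::'a::{ordered_real_vector,lattice})"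
  using aa_triangle[of x "- (c *\<^sub>R y)"] by (simp add: aa_neg aa_scale)
lemma le_pp_diff:
  fixes a v w :: "'a::{ordered_real_vector,lattice}"
  assumes "0 \<le> a" "0 \<le> v" "inf a v = 0" "a \<le> w"
  shows "a \<le> pp (w - v)"
proof -
  have "w \<le> pp (w - v) + v" using le_pp[of "w - v"] by (simp add: diff_le_eq)
  then have "a \<le> inf a (pp (w - v) + v)" using assms by simp
  also have "\<dots> \<le> inf a (pp (w - v)) + inf a v" using assms by (intro riesz_ineq) auto
  also have "\<dots> \<le> pp (w - v)" using assms by simp
  finally show ?thesis .
qed
lemma distrib_inf_sup:
  fixes a b c :: "'a::{ordered_real_vector,lattice}"
  shows "inf a (sup b c) = sup (inf a b) (inf a c)"
proof (rule order.antisym)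
  show "sup (inf a b) (inf a c) \<le> inf a (sup b c)" by (simp add: le_supI1 le_supI2 inf_mono)
  define m where "m = inf a b"
  define A where "A = a - m"
  define B where "B = b - m"
  define C where "C = c - m"
  have A0: "0 \<le> A" and B0: "0 \<le> B" by (simp_all add: A_def B_def m_def)
  have AB: "inf A B = 0" by (simp add: A_def B_def m_def diff_inf_r[symmetric])
  have "inf a (sup b c) - m = inf A (sup B C)"
    by (simp only: A_def B_def C_def diff_inf_r diff_sup_r)
  also have "sup B C = B + pp (C - B)" using sup_eq_pp[of C B] by (simp only: sup_commute)
  also have "inf A (B + pp (C - B)) \<le> inf A B + inf A (pp (C - B))"
    using A0 B0 by (intro riesz_ineq) auto
  also have "\<dots> = inf A (pp (C - B))" using AB by simp
  also have "\<dots> \<le> inf A (pp C)"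
    using B0 by (intro inf_mono pp_mono) auto
  also have "\<dots> \<le> pp (inf A C)"
  proof -
    define al where "al = inf A (pp C)"
    have al0: "0 \<le> al" using A0 by (simp add: al_def)
    have aln: "inf al (nn C) = 0"
      using disj_mono[of al "pp C" "nn C"] pp_nn_inf[of C] al0 by (simp add: al_def)
    have "al - nn C \<le> inf A C"
    proof -
      have "al - nn C = inf (A - nn C) (pp C - nn C)" by (simp only: al_def diff_inf_r)
      also have "\<dots> \<le> inf A C" using pp_nn[of C] by (intro inf_mono) auto
      finally show ?thesis .
    qed
    then have "pp (al - nn C) \<le> pp (inf A C)" by (rule pp_mono)
    moreover have "pp (al - nn C) = al" using disj_pp[OF al0 _ aln] by simp
    ultimately show ?thesis by (simp add: al_def)
  qed
  also have "pp (inf A C) = sup (inf a c - m) 0"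
    by (simp only: pp_def A_def C_def diff_inf_r)
  finally have "inf a (sup b c) - m \<le> sup (inf a c - m) 0" .
  then have "inf a (sup b c) \<le> sup (inf a c - m) 0 + m" by (simp add: diff_le_eq)
  also have "\<dots> = sup (inf a c) m" by (simp add: add_sup_r)
  also have "\<dots> = sup (inf a b) (inf a c)" by (simp add: m_def sup_commute)
  finally show "inf a (sup b c) \<le> sup (inf a b) (inf a c)" .
qed

definition pbp :: "('a::{ordered_real_vector,lattice} \<Rightarrow> 'a) \<Rightarrow> bool" where
  "pbp T \<longleftrightarrow> (\<forall>x y. T (x + y) = T x + T y) \<and> (\<forall>c x. T (c *\<^sub>R x) = c *\<^sub>R T x)
     \<and> (\<forall>x. 0 \<le> x \<longrightarrow> 0 \<le> T x) \<and> (\<forall>x y. 0 \<le> x \<longrightarrow> 0 \<le> y \<longrightarrow> inf x y = 0 \<longrightarrow> inf (T x) y = 0)"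

lemma pbp_add: "pbp T \<Longrightarrow> T (x + y) = T x + T y" by (simp add: pbp_def)
lemma pbp_scale: "pbp T \<Longrightarrow> T (c *\<^sub>R x) = c *\<^sub>R T x" by (simp add: pbp_def)
lemma pbp_pos: "pbp T \<Longrightarrow> 0 \<le> x \<Longrightarrow> 0 \<le> T x" by (simp add: pbp_def)
lemma pbp_bp: "pbp T \<Longrightarrow> 0 \<le> x \<Longrightarrow> 0 \<le> y \<Longrightarrow> inf x y = 0 \<Longrightarrow> inf (T x) y = 0"
  by (simp add: pbp_def)
lemma pbp_zero: "pbp T \<Longrightarrow> T 0 = 0"
  using pbp_scale[of T 0 0] by simp
lemma pbp_neg: "pbp T \<Longrightarrow> T (- x) = - T x"
  using pbp_scale[of T "-1" x] by simp
lemma pbp_diff: "pbp T \<Longrightarrow> T (x - y) = T x - T y"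
  using pbp_add[of T x "- y"] pbp_neg[of T y] by simp
lemma pbp_mono: "pbp T \<Longrightarrow> x \<le> y \<Longrightarrow> T x \<le> T y"
  using pbp_pos[of T "y - x"] pbp_diff[of T y x] by simp
lemma pbp_pp: "pbp T \<Longrightarrow> T (pp x) = pp (T x)"
proof -
  assume T: "pbp T"
  have d1: "inf (T (pp x)) (nn x) = 0" by (rule pbp_bp[OF T]) (simp_all add: pp_nn_inf)
  have "inf (T (nn x)) (T (pp x)) = 0"
    by (rule pbp_bp[OF T]) (simp_all add: pbp_pos[OF T] d1[unfolded inf_commute[of "T (pp x)"]])
  then have d2: "inf (T (pp x)) (T (nn x)) = 0" by (simp add: inf_commute)
  have "T x = T (pp x) - T (nn x)" using pbp_diff[OF T, of "pp x" "nn x"] pp_nn[of x] by simp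
  then show ?thesis using disj_pp[OF pbp_pos[OF T] pbp_pos[OF T] d2] by simp
qed
lemma pbp_nn: "pbp T \<Longrightarrow> T (nn x) = nn (T x)"
  by (simp add: nn_pp pbp_pp pbp_neg)
lemma pbp_aa: "pbp T \<Longrightarrow> T (aa x) = aa (T x)"
  by (simp add: aa_eq pbp_add pbp_pp pbp_nn)
lemma pbp_inf: "pbp T \<Longrightarrow> T (inf x y) = inf (T x) (T y)"
  by (simp add: inf_eq_pp pbp_diff pbp_pp)
lemma pbp_sum: "pbp T \<Longrightarrow> pbp S \<Longrightarrow> pbp (\<lambda>x. T x + S x)"
proof -
  assume T: "pbp T" and S: "pbp S"
  show ?thesis unfolding pbp_def
  proof (intro conjI allI impI)
    fix x y show "T (x + y) + S (x + y) = T x + S x + (T y + S y)" using T S by (simp add: pbp_add algebra_simps)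
  next
    fix c x show "T (c *\<^sub>R x) + S (c *\<^sub>R x) = c *\<^sub>R (T x + S x)" using T S by (simp add: pbp_scale scaleR_add_right)
  next
    fix x :: 'a assume "0 \<le> x" then show "0 \<le> T x + S x" using T S by (simp add: pbp_pos add_nonneg_nonneg)
  next
    fix x y :: 'a assume h: "0 \<le> x" "0 \<le> y" "inf x y = 0"
    have "inf y (T x) = 0" using pbp_bp[OF T h] by (simp add: inf_commute)
    moreover have "inf y (S x) = 0" using pbp_bp[OF S h] by (simp add: inf_commute)
    ultimately have "inf y (T x + S x) = 0" using h T S by (intro disj_add) (auto simp: pbp_pos)
    then show "inf (T x + S x) y = 0" by (simp add: inf_commute)
  qed
qed
lemma pbp_smul: "0 \<le> (c::real) \<Longrightarrow> pbp (\<lambda>x::'a::{ordered_real_vector,lattice}. c *\<^sub>R x)"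
  unfolding pbp_def
proof (intro conjI allI impI)
  fix x y :: 'a assume "0 \<le> c" "0 \<le> x" "0 \<le> y" "inf x y = 0"
  then show "inf (c *\<^sub>R x) y = 0" using disj_scale[of x y c 1] by simp
qed (auto simp: scaleR_add_right scaleR_nonneg_nonneg)
lemma pbp_comp: "pbp T \<Longrightarrow> pbp S \<Longrightarrow> pbp (\<lambda>x. S (T x))"
  unfolding pbp_def by auto

lemma arch_lemma:
  fixes a b :: "'a::{ordered_real_vector,lattice}"
  assumes arch: "archimedean_vl TYPE('a)" and a0: "0 \<le> a"
    and h: "\<And>n::nat. 1 \<le> n \<Longrightarrow> a \<le> (1 / real n) *\<^sub>R b"
  shows "a = 0"
proof -
  have "\<forall>n::nat. real n *\<^sub>R a \<le> b"
  proof
    fix n :: nat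
    show "real n *\<^sub>R a \<le> b"
    proof (cases "n = 0")
      case True
      have "a \<le> b" using h[of 1] by simp
      then show ?thesis using True a0 by simp
    next
      case False
      then have "real n *\<^sub>R a \<le> real n *\<^sub>R ((1 / real n) *\<^sub>R b)"
        using h[of n] by (intro scaleR_left_mono) auto
      then show ?thesis using False by simp
    qed
  qed
  then show ?thesis using arch a0 unfolding archimedean_vl_def by blast
qed

lemma aa_zero: "aa z = 0 \<Longrightarrow> z = (0::'a::{ordered_real_vector,lattice})"
proof -
  assume h: "aa z = 0"
  have "z \<le> 0" using le_aa[of z] h by simp
  moreover have "- z \<le> 0" using neg_le_aa[of z] h by simp
  moreover have "0 \<le> z" using \<open>- z \<le> 0\<close> by simp
  ultimately show ?thesis by (meson order.antisym)
qed

fun grd :: "'a::{ordered_real_vector,lattice} \<Rightarrow> 'a \<Rightarrow> real \<Rightarrow> nat \<Rightarrow> 'a" where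
  "grd x y d 0 = aa y"
| "grd x y d (Suc k) = inf (grd x y d k) (aa ((real (Suc k) * d) *\<^sub>R x - y))"

lemma grd_lower:
  assumes P: "pbp \<Phi>" and h: "\<And>k. k \<le> N \<Longrightarrow> a \<le> \<Phi> (aa ((real k * d) *\<^sub>R x - y))"
  shows "a \<le> \<Phi> (grd x y d N)"
  using h
proof (induction N)
  case 0
  then have "a \<le> \<Phi> (aa ((real 0 * d) *\<^sub>R x - y))" by blast
  then show ?case by (simp add: aa_neg)
next
  case (Suc N)
  have "a \<le> \<Phi> (grd x y d N)" using Suc.IH Suc.prems by simp
  moreover have "a \<le> \<Phi> (aa ((real (Suc N) * d) *\<^sub>R x - y))" using Suc.prems by blast
  ultimately show ?case by (simp add: pbp_inf[OF P])
qed

lemma grid_core: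
  fixes h c :: "'a::{ordered_real_vector,lattice}"
  assumes h: "0 \<le> h"
  shows "inf (h + pp c) (aa (h - c)) \<le> sup c h"
proof -
  have "aa (h - c) = sup (h - c) (c - h)" by (simp add: aa_def)
  then have e: "inf (h + pp c) (aa (h - c)) = sup (inf (h + pp c) (h - c)) (inf (h + pp c) (c - h))"
    by (simp only: distrib_inf_sup)
  have "inf (h + pp c) (h - c) = h + inf (pp c) (- c)"
    by (simp only: add_inf_l diff_conv_add_uminus)
  also have "inf (pp c) (- c) \<le> inf (pp c) (nn c)"
  proof (rule inf_mono)
    have "- c = nn c - pp c" using pp_nn[of c] by (simp add: algebra_simps)
    then show "- c \<le> nn c" by simp
  qed simp
  also have "\<dots> = 0" by (rule pp_nn_inf)
  finally have 1: "inf (h + pp c) (h - c) \<le> h" by simp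
  have "c - h \<le> c" using h by simp
  then have 2: "inf (h + pp c) (c - h) \<le> c" by (rule order.trans[OF inf_le2])
  show ?thesis unfolding e using 1 2 by (meson le_supI sup_ge1 sup_ge2 order.trans)
qed

lemma grd_bound:
  fixes x y :: "'a::{ordered_real_vector,lattice}"
  assumes x: "0 \<le> x" and d: "0 \<le> d"
  shows "grd x y d N \<le> d *\<^sub>R x + nn y + pp (y - (real N * d) *\<^sub>R x)"
proof (induction N)
  case 0
  have "0 \<le> d *\<^sub>R x" using x d by (simp add: scaleR_nonneg_nonneg)
  then have "pp y + nn y \<le> d *\<^sub>R x + nn y + pp y" by simp
  then show ?case by (simp add: aa_eq)
next
  case (Suc N)
  define h where "h = d *\<^sub>R x"
  define c where "c = y - (real N * d) *\<^sub>R x"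
  have h0: "0 \<le> h" using x d by (simp add: h_def scaleR_nonneg_nonneg)
  have e1: "(real (Suc N) * d) *\<^sub>R x - y = h - c"
    by (simp add: h_def c_def algebra_simps)
  have e2: "y - (real (Suc N) * d) *\<^sub>R x = c - h"
    by (simp add: h_def c_def algebra_simps)
  have "grd x y d (Suc N) = inf (grd x y d N) (aa (h - c))" by (simp only: grd.simps e1)
  also have "\<dots> \<le> inf ((h + pp c) + nn y) (aa (h - c))"
    using Suc.IH by (intro inf_mono) (simp_all add: h_def c_def add_ac)
  also have "\<dots> \<le> inf (h + pp c) (aa (h - c)) + nn y" by (rule inf_add_le) simp
  also have "\<dots> \<le> sup c h + nn y" using grid_core[OF h0, of c] by simp
  also have "sup c h = h + pp (c - h)" by (rule sup_eq_pp)
  finally have f: "grd x y d (Suc N) \<le> h + pp (c - h) + nn y" .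
  have eq: "h + pp (c - h) + nn y = d *\<^sub>R x + nn y + pp (y - (real (Suc N) * d) *\<^sub>R x)"
    by (simp only: e2 h_def add_ac)
  show ?case using f eq by (rule ord_le_eq_trans)
qed

lemma tail_lemma:
  fixes x y :: "'a::{ordered_real_vector,lattice}"
  assumes x: "0 \<le> x" and y: "0 \<le> y" and M: "0 < M"
  shows "inf (pp (y - M *\<^sub>R x)) x \<le> (1/M) *\<^sub>R y"
proof -
  define w where "w = (1/M) *\<^sub>R y - x"
  have yw: "y - M *\<^sub>R x = M *\<^sub>R w" using M by (simp add: w_def scaleR_diff_right)
  define al where "al = inf (M *\<^sub>R pp w) x"
  have "pp (y - M *\<^sub>R x) = M *\<^sub>R pp w" using M by (simp add: yw scale_pp)
  then have e: "inf (pp (y - M *\<^sub>R x)) x = al" by (simp add: al_def)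
  have al0: "0 \<le> al" using M x by (simp add: al_def scaleR_nonneg_nonneg)
  have "inf (M *\<^sub>R pp w) (1 *\<^sub>R nn w) = 0" using M pp_nn_inf[of w] by (intro disj_scale) auto
  then have d: "inf al (nn w) = 0"
    using al0 by (intro disj_mono[of al "M *\<^sub>R pp w" "nn w"]) (simp_all add: al_def)
  have nw: "nn w \<le> x"
  proof -
    have "0 \<le> (1/M) *\<^sub>R y" using M y by (simp add: scaleR_nonneg_nonneg)
    then have "- w \<le> x" by (simp add: w_def)
    then show ?thesis using x by (simp add: nn_def)
  qed
  have "al + nn w = sup al (nn w)" using d by (rule disj_sum_sup)
  also have "\<dots> \<le> x" using nw by (simp add: al_def)
  finally have "al \<le> x - nn w" by (simp add: le_diff_eq)
  also have "x - nn w \<le> x + w"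
  proof -
    have h: "0 \<le> w + nn w" using pp_eq[of w] pp_ge0[of w] by simp
    have "- nn w \<le> w" using add_le_cancel_right[of "- nn w" "nn w" w] h by simp
    then show ?thesis using add_left_mono[of "- nn w" w x] by simp
  qed
  also have "x + w = (1/M) *\<^sub>R y" by (simp add: w_def)
  finally show ?thesis using e by simp
qed

lemma SC:
  fixes T :: "'a::{ordered_real_vector,lattice} \<Rightarrow> 'a"
  assumes arch: "archimedean_vl TYPE('a)" and T: "pbp T" and c: "0 \<le> c"
    and x: "0 \<le> x" and y: "0 \<le> y"
  shows "inf (pp (T x - c *\<^sub>R x)) (nn (T y - c *\<^sub>R y)) = 0"
proof -
  define B where "B z = T z - c *\<^sub>R z" for z
  define \<Phi> where "\<Phi> z = T z + c *\<^sub>R z" for z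
  have Phi: "pbp \<Phi>" unfolding \<Phi>_def by (rule pbp_sum[OF T pbp_smul[OF c]])
  define a where "a = inf (pp (B x)) (nn (B y))"
  have a0: "0 \<le> a" by (simp add: a_def)
  define P where "P = pp (B x)"
  define N1 where "N1 = nn (B x)"
  define P' where "P' = pp (B y)"
  define N' where "N' = nn (B y)"
  have aP: "a \<le> P" and aN': "a \<le> N'" by (simp_all add: a_def P_def N'_def)
  have aN1: "inf a N1 = 0"
    using pp_nn_inf[of "B x"] by (intro disj_mono[OF a0 aP]) (simp_all add: P_def N1_def)
  have aP': "inf a P' = 0"
  proof (rule disj_mono[OF a0 aN'])
    show "0 \<le> P'" by (simp add: P'_def)
    show "inf N' P' = 0" using pp_nn_inf[of "B y"] by (simp add: N'_def P'_def inf_commute)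
  qed
  have step1: "a \<le> \<Phi> (aa (\<tau> *\<^sub>R x - y))" if tau: "0 \<le> \<tau>" for \<tau>
  proof -
    have Bl: "B (\<tau> *\<^sub>R x - y) = \<tau> *\<^sub>R B x - B y"
      by (simp add: B_def pbp_diff[OF T] pbp_scale[OF T] algebra_simps)
    have Bx: "B x = P - N1" using pp_nn[of "B x"] by (simp add: P_def N1_def)
    have By: "B y = P' - N'" using pp_nn[of "B y"] by (simp add: P'_def N'_def)
    have Bl2: "B (\<tau> *\<^sub>R x - y) = (\<tau> *\<^sub>R P + N') - (\<tau> *\<^sub>R N1 + P')"
      unfolding Bl Bx By by (simp add: algebra_simps)
    have w: "a \<le> \<tau> *\<^sub>R P + N'"
    proof -
      have "0 \<le> \<tau> *\<^sub>R P" using tau by (simp add: P_def scaleR_nonneg_nonneg)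
      then have "N' \<le> \<tau> *\<^sub>R P + N'" by simp
      then show ?thesis using aN' by (rule order.trans[rotated])
    qed
    have v0: "0 \<le> \<tau> *\<^sub>R N1 + P'" using tau by (simp add: N1_def P'_def scaleR_nonneg_nonneg)
    have av: "inf a (\<tau> *\<^sub>R N1 + P') = 0"
    proof (rule disj_add)
      show "inf a (\<tau> *\<^sub>R N1) = 0" using disj_scale[OF a0 _ aN1, of 1 \<tau>] tau by (simp add: N1_def)
    qed (use a0 tau aP' in \<open>simp_all add: N1_def P'_def scaleR_nonneg_nonneg\<close>)
    have "a \<le> pp (B (\<tau> *\<^sub>R x - y))" using le_pp_diff[OF a0 v0 av w] Bl2 by simp
    also have "\<dots> \<le> aa (B (\<tau> *\<^sub>R x - y))" by (rule pp_le_aa)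
    also have "\<dots> \<le> aa (T (\<tau> *\<^sub>R x - y)) + c *\<^sub>R aa (\<tau> *\<^sub>R x - y)"
      unfolding B_def using c by (rule aa_diff_le)
    also have "\<dots> = \<Phi> (aa (\<tau> *\<^sub>R x - y))" by (simp add: \<Phi>_def pbp_aa[OF T])
    finally show ?thesis .
  qed
  have step2: "a \<le> \<Phi> (grd x y d N)" if d: "0 \<le> d" for d N
    by (rule grd_lower[OF Phi]) (use d in \<open>intro step1; simp\<close>)
  have tb: "a \<le> \<Phi> x"
  proof -
    have "a \<le> pp (B x)" by (simp add: a_def)
    also have "\<dots> \<le> pp (T x)" using c x unfolding B_def by (intro pp_mono) (simp add: scaleR_nonneg_nonneg)
    also have "\<dots> = T x" by (rule pp_id[OF pbp_pos[OF T x]])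
    also have "\<dots> \<le> \<Phi> x" using c x by (simp add: \<Phi>_def scaleR_nonneg_nonneg)
    finally show ?thesis .
  qed
  have main: "a \<le> (1 / real n) *\<^sub>R \<Phi> (x + y)" if n: "1 \<le> n" for n :: nat
  proof -
    define d where "d = 1 / real n"
    have d0: "0 \<le> d" by (simp add: d_def)
    have M: "real n * real n * d = real n" using n by (simp add: d_def)
    have "- y \<le> 0" using y by simp
    then have nny: "nn y = 0" by (simp add: nn_def sup.absorb2)
    have "a \<le> \<Phi> (grd x y d (n * n))" using step2[OF d0] .
    also have "\<dots> \<le> \<Phi> (d *\<^sub>R x + nn y + pp (y - (real (n * n) * d) *\<^sub>R x))"
      by (intro pbp_mono[OF Phi] grd_bound x d0)
    also have "\<dots> = \<Phi> (pp (y - real n *\<^sub>R x)) + \<Phi> (d *\<^sub>R x)"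
      by (simp add: M nny pbp_add[OF Phi] add.commute)
    finally have a1: "a \<le> \<Phi> (pp (y - real n *\<^sub>R x)) + \<Phi> (d *\<^sub>R x)" .
    have "a \<le> inf (\<Phi> (pp (y - real n *\<^sub>R x)) + \<Phi> (d *\<^sub>R x)) (\<Phi> x)" using a1 tb by simp
    also have "\<dots> \<le> inf (\<Phi> (pp (y - real n *\<^sub>R x))) (\<Phi> x) + \<Phi> (d *\<^sub>R x)"
      by (rule inf_add_le) (use x d0 in \<open>simp add: pbp_pos[OF Phi] scaleR_nonneg_nonneg\<close>)
    also have "inf (\<Phi> (pp (y - real n *\<^sub>R x))) (\<Phi> x) = \<Phi> (inf (pp (y - real n *\<^sub>R x)) x)"
      by (simp add: pbp_inf[OF Phi])
    also have "\<dots> \<le> \<Phi> ((1 / real n) *\<^sub>R y)"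
      using n by (intro pbp_mono[OF Phi] tail_lemma x y) simp
    finally show ?thesis by (simp add: d_def pbp_scale[OF Phi] pbp_add[OF Phi] scaleR_add_right add.commute)
  qed
  have "a = 0" by (rule arch_lemma[OF arch a0 main])
  then show ?thesis by (simp add: a_def B_def)
qed

lemma loc:
  fixes T :: "'a::{ordered_real_vector,lattice} \<Rightarrow> 'a"
  assumes arch: "archimedean_vl TYPE('a)" and T: "pbp T" and K: "0 \<le> K"
    and x: "0 \<le> x" and u: "0 \<le> u" and ux: "u \<le> nn (T x - K *\<^sub>R x)"
  shows "T u \<le> K *\<^sub>R u"
proof -
  define w where "w = pp (T u - K *\<^sub>R u)"
  have w0: "0 \<le> w" by (simp add: w_def)
  have "inf w (nn (T x - K *\<^sub>R x)) = 0" unfolding w_def by (rule SC[OF arch T K u x])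
  then have "inf (nn (T x - K *\<^sub>R x)) w = 0" by (simp add: inf_commute)
  then have uw: "inf u w = 0" by (rule disj_mono[OF u ux w0])
  have Tw: "inf (T u) w = 0" by (rule pbp_bp[OF T u w0 uw])
  have "w \<le> pp (T u)" unfolding w_def using K u by (intro pp_mono) (simp add: scaleR_nonneg_nonneg)
  also have "\<dots> = T u" by (rule pp_id[OF pbp_pos[OF T u]])
  finally have "w \<le> T u" .
  then have "inf w w \<le> inf (T u) w" by (rule inf_mono) simp
  then have "w = 0" using Tw w0 by (simp add: order.antisym)
  then have "T u - K *\<^sub>R u \<le> 0" using le_pp[of "T u - K *\<^sub>R u"] by (simp add: w_def)
  then show ?thesis by simp
qed

lemma aa_diff_tri: "aa (a - b) \<le> aa a + aa (b::'a::{ordered_real_vector,lattice})"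
proof -
  have "aa (a + - b) \<le> aa a + aa (- b)" by (rule aa_triangle)
  then show ?thesis by (simp only: diff_conv_add_uminus[symmetric] aa_neg)
qed
lemma aa_diff_pos: "0 \<le> a \<Longrightarrow> 0 \<le> b \<Longrightarrow> aa (a - b) \<le> a + (b::'a::{ordered_real_vector,lattice})"
  using aa_diff_tri[of a b] by (simp add: aa_id)

lemma comm_bdd:
  fixes T S :: "'a::{ordered_real_vector,lattice} \<Rightarrow> 'a"
  assumes arch: "archimedean_vl TYPE('a)" and T: "pbp T" and S: "pbp S" and K: "0 < K"
    and u: "0 \<le> u" and Tu: "T u \<le> K *\<^sub>R u" and Su: "S u \<le> K *\<^sub>R u"
  shows "S (T u) = T (S u)"
proof -
  define D where "D = S (T u) - T (S u)"
  define \<Phi>1 where "\<Phi>1 z = S z + K *\<^sub>R z" for z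
  define \<Phi>2 where "\<Phi>2 z = T z + K *\<^sub>R z" for z
  have P1: "pbp \<Phi>1" unfolding \<Phi>1_def using K by (intro pbp_sum[OF S] pbp_smul) simp
  have P2: "pbp \<Phi>2" unfolding \<Phi>2_def using K by (intro pbp_sum[OF T] pbp_smul) simp
  have bd: "aa D \<le> \<Phi>1 (aa (\<tau> *\<^sub>R u - T u)) + \<Phi>2 (aa (\<mu> *\<^sub>R u - S u))"
    if tau: "0 \<le> \<tau>" "\<tau> \<le> K" and mu: "0 \<le> \<mu>" "\<mu> \<le> K" for \<tau> \<mu>
  proof -
    define r where "r = T u - \<tau> *\<^sub>R u"
    define q where "q = S u - \<mu> *\<^sub>R u"
    have De: "D = (S r - \<mu> *\<^sub>R r) - (T q - \<tau> *\<^sub>R q)"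
      by (simp add: D_def r_def q_def pbp_diff[OF T] pbp_diff[OF S] pbp_scale[OF T] pbp_scale[OF S] algebra_simps)
    have "aa D \<le> aa (S r - \<mu> *\<^sub>R r) + aa (T q - \<tau> *\<^sub>R q)"
      unfolding De by (rule aa_diff_tri)
    also have "\<dots> \<le> (S (aa r) + \<mu> *\<^sub>R aa r) + (T (aa q) + \<tau> *\<^sub>R aa q)"
      using aa_diff_le[OF mu(1), of "S r" r] aa_diff_le[OF tau(1), of "T q" q]
      by (intro add_mono) (simp_all add: pbp_aa[OF S] pbp_aa[OF T])
    also have "\<dots> \<le> \<Phi>1 (aa r) + \<Phi>2 (aa q)"
      unfolding \<Phi>1_def \<Phi>2_def using tau mu
      by (intro add_mono add_left_mono scaleR_right_mono) simp_all
    also have "aa r = aa (\<tau> *\<^sub>R u - T u)" unfolding r_def by (metis aa_neg minus_diff_eq)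
    also have "aa q = aa (\<mu> *\<^sub>R u - S u)" unfolding q_def by (metis aa_neg minus_diff_eq)
    finally show ?thesis .
  qed
  have main: "aa D \<le> (1 / real n) *\<^sub>R (K *\<^sub>R (\<Phi>1 u + \<Phi>2 u))" if n: "1 \<le> n" for n :: nat
  proof -
    define d where "d = K / real n"
    have d0: "0 \<le> d" using K by (simp add: d_def)
    have grid_in: "real k * d \<le> K" if "k \<le> n" for k
    proof -
      have "real k * d \<le> real n * d" using that d0 by (intro mult_right_mono) simp_all
      also have "\<dots> = K" using n by (simp add: d_def)
      finally show ?thesis .
    qed
    have g1: "aa D - \<Phi>2 (aa (\<mu> *\<^sub>R u - S u)) \<le> \<Phi>1 (grd u (T u) d n)" if mu: "0 \<le> \<mu>" "\<mu> \<le> K" for \<mu>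
      by (rule grd_lower[OF P1]) (use bd[OF _ _ mu] grid_in d0 in \<open>simp add: diff_le_eq\<close>)
    then have g2: "aa D - \<Phi>1 (grd u (T u) d n) \<le> \<Phi>2 (grd u (S u) d n)"
      by (intro grd_lower[OF P2]) (use grid_in d0 in \<open>simp add: diff_le_eq add.commute\<close>)
    have gb1: "grd u (T u) d n \<le> d *\<^sub>R u"
    proof -
      have "grd u (T u) d n \<le> d *\<^sub>R u + nn (T u) + pp (T u - (real n * d) *\<^sub>R u)"
        by (rule grd_bound[OF u d0])
      also have "nn (T u) = 0" using pbp_pos[OF T u] by (simp add: nn_def sup.absorb2)
      also have "real n * d = K" using n by (simp add: d_def)
      also have "pp (T u - K *\<^sub>R u) = 0" using Tu by (simp add: pp_def sup.absorb2)
      finally show ?thesis by simp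
    qed
    have gb2: "grd u (S u) d n \<le> d *\<^sub>R u"
    proof -
      have "grd u (S u) d n \<le> d *\<^sub>R u + nn (S u) + pp (S u - (real n * d) *\<^sub>R u)"
        by (rule grd_bound[OF u d0])
      also have "nn (S u) = 0" using pbp_pos[OF S u] by (simp add: nn_def sup.absorb2)
      also have "real n * d = K" using n by (simp add: d_def)
      also have "pp (S u - K *\<^sub>R u) = 0" using Su by (simp add: pp_def sup.absorb2)
      finally show ?thesis by simp
    qed
    have "aa D \<le> \<Phi>1 (grd u (T u) d n) + \<Phi>2 (grd u (S u) d n)" using g2 by (simp add: diff_le_eq add.commute)
    also have "\<dots> \<le> \<Phi>1 (d *\<^sub>R u) + \<Phi>2 (d *\<^sub>R u)"
      by (intro add_mono pbp_mono[OF P1] pbp_mono[OF P2] gb1 gb2)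
    also have "\<dots> = (1 / real n) *\<^sub>R (K *\<^sub>R (\<Phi>1 u + \<Phi>2 u))"
      by (simp add: d_def pbp_scale[OF P1] pbp_scale[OF P2] scaleR_add_right)
    finally show ?thesis .
  qed
  have "aa D = 0" by (rule arch_lemma[OF arch aa_ge0 main])
  then have "D = 0" by (rule aa_zero)
  then show ?thesis by (simp add: D_def)
qed

lemma neg_nn_le: "- nn r \<le> (r::'a::{ordered_real_vector,lattice})"
proof -
  have "0 \<le> r + nn r" using pp_eq[of r] pp_ge0[of r] by simp
  then show ?thesis using add_le_cancel_right[of "- nn r" "nn r" r] by simp
qed

lemma comm_pbp:
  fixes T S :: "'a::{ordered_real_vector,lattice} \<Rightarrow> 'a"
  assumes arch: "archimedean_vl TYPE('a)" and T: "pbp T" and S: "pbp S" and x: "0 \<le> x"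
  shows "S (T x) = T (S x)"
proof -
  define D where "D z = S (T z) - T (S z)" for z
  have Dlin: "D (a - b) = D a - D b" for a b
    by (simp add: D_def pbp_diff[OF T] pbp_diff[OF S] algebra_simps)
  have ST: "pbp (\<lambda>z. S (T z) + T (S z))" by (rule pbp_sum[OF pbp_comp[OF T S] pbp_comp[OF S T]])
  have key: "pp (x - nn (R x - K *\<^sub>R x)) \<le> (1 / real n) *\<^sub>R R x"
    if R: "pbp R" and n: "1 \<le> n" and K: "K = real n + 1" for R n K
  proof -
    define r where "r = R x - K *\<^sub>R x"
    have "x - nn r \<le> x + r" using neg_nn_le[of r] by (simp add: add_left_mono[of "- nn r" r x])
    also have "x + r = R x - real n *\<^sub>R x" by (simp add: r_def K algebra_simps)
    finally have "pp (x - nn r) \<le> pp (R x - real n *\<^sub>R x)" by (rule pp_mono)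
    moreover have "pp (x - nn r) \<le> x"
    proof -
      have "pp (x - nn r) \<le> pp x" by (intro pp_mono) simp
      then show ?thesis using pp_id[OF x] by simp
    qed
    ultimately have "pp (x - nn r) \<le> inf (pp (R x - real n *\<^sub>R x)) x" by simp
    also have "\<dots> \<le> (1 / real n) *\<^sub>R R x"
      using n by (intro tail_lemma x pbp_pos[OF R x]) simp
    finally show ?thesis by (simp add: r_def)
  qed
  have main: "aa (D x) \<le> (1 / real n) *\<^sub>R (S (T (T x + S x)) + T (S (T x + S x)))"
    if n: "1 \<le> n" for n :: nat
  proof -
    define K where "K = real n + 1"
    have K0: "0 < K" by (simp add: K_def)
    define A where "A = nn (T x - K *\<^sub>R x)"
    define B where "B = nn (S x - K *\<^sub>R x)"
    define u where "u = inf x (inf A B)"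
    have u0: "0 \<le> u" using x by (simp add: u_def A_def B_def)
    have uA: "u \<le> A" and uB: "u \<le> B" and ux: "u \<le> x" by (simp_all add: u_def le_infI2)
    have Tu: "T u \<le> K *\<^sub>R u" using K0 uA unfolding A_def by (intro loc[OF arch T _ x u0]) simp_all
    have Su: "S u \<le> K *\<^sub>R u" using K0 uB unfolding B_def by (intro loc[OF arch S _ x u0]) simp_all
    have Du: "D u = 0" using comm_bdd[OF arch T S K0 u0 Tu Su] by (simp add: D_def)
    define z where "z = x - u"
    have z0: "0 \<le> z" using ux by (simp add: z_def)
    have Dx: "D x = D z" using Dlin[of x u] Du by (simp add: z_def)
    have "z = sup (x - x) (sup (x - A) (x - B))" by (simp only: z_def u_def diff_inf_l)
    also have "\<dots> \<le> pp (x - A) + pp (x - B)"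
    proof -
      have "x - A \<le> pp (x - A) + pp (x - B)" using le_pp[of "x - A"] by (simp add: add_increasing2)
      moreover have "x - B \<le> pp (x - A) + pp (x - B)" using le_pp[of "x - B"] by (simp add: add_increasing)
      ultimately show ?thesis by (simp add: add_nonneg_nonneg)
    qed
    also have "\<dots> \<le> (1 / real n) *\<^sub>R T x + (1 / real n) *\<^sub>R S x"
      unfolding A_def B_def by (intro add_mono key[OF T n] key[OF S n]) (simp_all add: K_def)
    also have "\<dots> = (1 / real n) *\<^sub>R (T x + S x)" by (simp add: scaleR_add_right)
    finally have zb: "z \<le> (1 / real n) *\<^sub>R (T x + S x)" .
    have "aa (D z) \<le> S (T z) + T (S z)" unfolding D_def
      by (rule aa_diff_pos) (simp_all add: z0 pbp_pos[OF S] pbp_pos[OF T])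
    then have "aa (D x) \<le> S (T z) + T (S z)" using Dx by simp
    also have "\<dots> \<le> S (T ((1 / real n) *\<^sub>R (T x + S x))) + T (S ((1 / real n) *\<^sub>R (T x + S x)))"
      using pbp_mono[OF ST zb] .
    also have "\<dots> = (1 / real n) *\<^sub>R (S (T (T x + S x)) + T (S (T x + S x)))"
      by (simp add: pbp_scale[OF T] pbp_scale[OF S] pbp_add[OF T] pbp_add[OF S] scaleR_add_right)
    finally show ?thesis .
  qed
  have "aa (D x) = 0" by (rule arch_lemma[OF arch aa_ge0 main])
  then have "D x = 0" by (rule aa_zero)
  then show ?thesis by (simp add: D_def)
qed

lemma comm_pbp_all:
  fixes T S :: "'a::{ordered_real_vector,lattice} \<Rightarrow> 'a"
  assumes arch: "archimedean_vl TYPE('a)" and T: "pbp T" and S: "pbp S"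
  shows "S (T x) = T (S x)"
proof -
  have "x = pp x - nn x" by (simp add: pp_nn)
  then have "S (T x) = S (T (pp x)) - S (T (nn x))" by (metis pbp_diff T S)
  also have "\<dots> = T (S (pp x)) - T (S (nn x))"
    by (simp add: comm_pbp[OF arch T S])
  also have "\<dots> = T (S x)" using \<open>x = pp x - nn x\<close> by (metis pbp_diff T S)
  finally show ?thesis .
qed

lemma fa_arch: "f_algebra TYPE('f::{real_algebra,ordered_real_vector,lattice}) \<Longrightarrow> archimedean_vl TYPE('f)"
  by (simp add: f_algebra_def)
lemma fa_pos: "f_algebra TYPE('f::{real_algebra,ordered_real_vector,lattice}) \<Longrightarrow> 0 \<le> x \<Longrightarrow> 0 \<le> y \<Longrightarrow> 0 \<le> (x::'f) * y"
  by (simp add: f_algebra_def)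
lemma fa_bp: "f_algebra TYPE('f::{real_algebra,ordered_real_vector,lattice}) \<Longrightarrow> inf x y = 0 \<Longrightarrow> 0 \<le> z \<Longrightarrow> inf ((x::'f) * z) y = 0"
  by (simp add: f_algebra_def)

lemma pbp_R:
  assumes F: "f_algebra TYPE('f::{real_algebra,ordered_real_vector,lattice})" and z: "0 \<le> (z::'f)"
  shows "pbp (\<lambda>x. x * z)"
  unfolding pbp_def
proof (intro conjI allI impI)
  fix x y :: 'f show "(x + y) * z = x * z + y * z" by (simp add: distrib_right)
next
  fix c and x :: 'f show "(c *\<^sub>R x) * z = c *\<^sub>R (x * z)" by simp
next
  fix x :: 'f assume "0 \<le> x" then show "0 \<le> x * z" using fa_pos[OF F _ z] by simp
next
  fix x y :: 'f assume "0 \<le> x" "0 \<le> y" "inf x y = 0" then show "inf (x * z) y = 0" using fa_bp[OF F _ z] by simp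
qed

lemma R_comm:
  assumes F: "f_algebra TYPE('f::{real_algebra,ordered_real_vector,lattice})" and a: "0 \<le> (a::'f)" and b: "0 \<le> b"
  shows "x * a * b = x * b * a"
  using comm_pbp_all[OF fa_arch[OF F] pbp_R[OF F a] pbp_R[OF F b], of x] by simp

lemma fa_comm_pos:
  assumes F: "f_algebra TYPE('f::{real_algebra,ordered_real_vector,lattice})" and S: "semiprime TYPE('f)"
    and a: "0 \<le> (a::'f)" and b: "0 \<le> b"
  shows "a * b = b * a"
proof -
  define c where "c = a * b - b * a"
  have xc: "x * c = 0" for x
    using R_comm[OF F a b, of x] by (simp add: c_def right_diff_distrib mult.assoc)
  have "mpow c (Suc 0) = 0" using xc[of c] by simp
  then have "c = 0" using S unfolding semiprime_def by blast
  then show ?thesis by (simp add: c_def)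
qed

lemma fa_comm:
  assumes F: "f_algebra TYPE('f::{real_algebra,ordered_real_vector,lattice})" and S: "semiprime TYPE('f)"
  shows "(a::'f) * b = b * a"
proof -
  have ea: "a = pp a - nn a" and eb: "b = pp b - nn b" by (simp_all add: pp_nn)
  have "a * b = (pp a - nn a) * (pp b - nn b)" using ea eb by simp
  also have "\<dots> = pp a * pp b - pp a * nn b - nn a * pp b + nn a * nn b"
    by (simp add: algebra_simps)
  also have "\<dots> = pp b * pp a - nn b * pp a - pp b * nn a + nn b * nn a"
    by (simp add: fa_comm_pos[OF F S])
  also have "\<dots> = (pp b - nn b) * (pp a - nn a)" by (simp add: algebra_simps)
  also have "\<dots> = b * a" using ea eb by simp
  finally show ?thesis .
qed

lemma mrm: "f_algebra TYPE('f::{real_algebra,ordered_real_vector,lattice}) \<Longrightarrow> 0 \<le> z \<Longrightarrow> x \<le> y \<Longrightarrow> x * z \<le> y * (z::'f)"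
  using fa_pos[of "y - x" z] by (simp add: left_diff_distrib)
lemma mlm: "f_algebra TYPE('f::{real_algebra,ordered_real_vector,lattice}) \<Longrightarrow> 0 \<le> z \<Longrightarrow> x \<le> y \<Longrightarrow> z * x \<le> z * (y::'f)"
  using fa_pos[of z "y - x"] by (simp add: right_diff_distrib)

lemma disj_prod:
  assumes F: "f_algebra TYPE('f::{real_algebra,ordered_real_vector,lattice})" and S: "semiprime TYPE('f)"
    and x: "0 \<le> (x::'f)" and y: "0 \<le> y" and d: "inf x y = 0"
  shows "x * y = 0"
proof -
  define w where "w = x * y"
  have "inf y x = 0" using d by (simp add: inf_commute)
  then have "inf (y * x) x = 0" using fa_bp[OF F _ x] by simp
  then have "inf x w = 0" by (simp add: w_def fa_comm[OF F S] inf_commute)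
  then have "inf (x * y) w = 0" using fa_bp[OF F _ y] by simp
  then have "inf w w = 0" by (simp add: w_def)
  then show ?thesis by (simp add: w_def)
qed

lemma pp_nn_prod:
  assumes F: "f_algebra TYPE('f::{real_algebra,ordered_real_vector,lattice})" and S: "semiprime TYPE('f)"
  shows "pp (x::'f) * nn x = 0" "nn x * pp x = 0"
proof -
  show "pp x * nn x = 0" by (rule disj_prod[OF F S]) (simp_all add: pp_nn_inf)
  then show "nn x * pp x = 0" by (simp add: fa_comm[OF F S])
qed

lemma sq_expand:
  assumes F: "f_algebra TYPE('f::{real_algebra,ordered_real_vector,lattice})" and S: "semiprime TYPE('f)"
  shows "(x::'f) * x = pp x * pp x + nn x * nn x" "aa x * aa x = x * x"
proof -
  have e: "x = pp x - nn x" by (simp add: pp_nn)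
  have "x * x = (pp x - nn x) * (pp x - nn x)" using e by simp
  also have "\<dots> = pp x * pp x - pp x * nn x - nn x * pp x + nn x * nn x" by (simp add: algebra_simps)
  finally show xx: "x * x = pp x * pp x + nn x * nn x" by (simp add: pp_nn_prod[OF F S])
  have "aa x * aa x = (pp x + nn x) * (pp x + nn x)" by (simp add: aa_eq)
  also have "\<dots> = pp x * pp x + pp x * nn x + nn x * pp x + nn x * nn x" by (simp add: algebra_simps)
  finally show "aa x * aa x = x * x" by (simp add: pp_nn_prod[OF F S] xx)
qed

lemma sq_nonneg:
  assumes F: "f_algebra TYPE('f::{real_algebra,ordered_real_vector,lattice})" and S: "semiprime TYPE('f)"
  shows "0 \<le> (x::'f) * x"
  using sq_expand(1)[OF F S, of x] fa_pos[OF F pp_ge0 pp_ge0, of x x] fa_pos[OF F nn_ge0 nn_ge0, of x x]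
  by (simp add: add_nonneg_nonneg)

lemma sq_mono:
  assumes F: "f_algebra TYPE('f::{real_algebra,ordered_real_vector,lattice})"
    and x: "0 \<le> (x::'f)" and xy: "x \<le> y"
  shows "x * x \<le> y * y"
proof -
  have y: "0 \<le> y" using x xy by simp
  have "x * x \<le> x * y" by (rule mlm[OF F x xy])
  also have "\<dots> \<le> y * y" by (rule mrm[OF F y xy])
  finally show ?thesis .
qed

lemma two_prod_le:
  assumes F: "f_algebra TYPE('f::{real_algebra,ordered_real_vector,lattice})" and S: "semiprime TYPE('f)"
  shows "2 *\<^sub>R ((u::'f) * v) \<le> u * u + v * v"
proof -
  have "0 \<le> (u - v) * (u - v)" by (rule sq_nonneg[OF F S])
  also have "(u - v) * (u - v) = u * u + v * v - 2 *\<^sub>R (u * v)"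
    by (simp add: algebra_simps scaleR_2 fa_comm[OF F S, of v u])
  finally show ?thesis by simp
qed

lemma inf_mult_right:
  assumes F: "f_algebra TYPE('f::{real_algebra,ordered_real_vector,lattice})" and z: "0 \<le> (z::'f)"
  shows "inf a b * z = inf (a * z) (b * z)"
  using pbp_inf[OF pbp_R[OF F z], of a b] by simp

lemma sq_inf:
  assumes F: "f_algebra TYPE('f::{real_algebra,ordered_real_vector,lattice})" and S: "semiprime TYPE('f)"
    and x: "0 \<le> (x::'f)" and y: "0 \<le> y"
  shows "inf x y * inf x y = inf (x * x) (y * y)"
proof -
  define m where "m = inf x y"
  define x' where "x' = x - m"
  define y' where "y' = y - m"
  have m0: "0 \<le> m" using x y by (simp add: m_def)
  have x'0: "0 \<le> x'" and y'0: "0 \<le> y'" by (simp_all add: x'_def y'_def m_def)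
  have dxy: "inf x' y' = 0" by (simp add: x'_def y'_def m_def diff_inf_r[symmetric])
  define X where "X = 2 *\<^sub>R (m * x') + x' * x'"
  define Y where "Y = 2 *\<^sub>R (m * y') + y' * y'"
  have X0: "0 \<le> X" using m0 x'0 by (simp add: X_def add_nonneg_nonneg scaleR_nonneg_nonneg fa_pos[OF F])
  have Y0: "0 \<le> Y" using m0 y'0 by (simp add: Y_def add_nonneg_nonneg scaleR_nonneg_nonneg fa_pos[OF F])
  have left_bp: "inf (a * b) c = 0" if "0 \<le> a" "0 \<le> b" "0 \<le> c" "inf b c = 0" for a b c :: 'f
    using fa_bp[OF F that(4) that(1)] by (simp add: fa_comm[OF F S, of a b])
  have "inf y' X = 0"
  proof -
    have "inf (m * x') y' = 0" by (rule left_bp[OF m0 x'0 y'0 dxy])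
    then have a1: "inf y' (2 *\<^sub>R (m * x')) = 0"
      using disj_scale[of "m * x'" y' 2 1] m0 x'0 y'0 fa_pos[OF F m0 x'0] by (simp add: inf_commute)
    have "inf (x' * x') y' = 0" by (rule left_bp[OF x'0 x'0 y'0 dxy])
    then have a2: "inf y' (x' * x') = 0" by (simp add: inf_commute)
    show ?thesis unfolding X_def
      by (rule disj_add[OF y'0 _ _ a1 a2]) (simp_all add: scaleR_nonneg_nonneg fa_pos[OF F] m0 x'0)
  qed
  then have dyx: "inf y' X = 0" .
  have "inf X Y = 0"
  proof -
    have "inf (m * y') X = 0" by (rule left_bp[OF m0 y'0 X0 dyx])
    then have a1: "inf X (2 *\<^sub>R (m * y')) = 0"
      using disj_scale[of "m * y'" X 2 1] m0 y'0 X0 fa_pos[OF F m0 y'0] by (simp add: inf_commute)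
    have "inf (y' * y') X = 0" by (rule left_bp[OF y'0 y'0 X0 dyx])
    then have a2: "inf X (y' * y') = 0" by (simp add: inf_commute)
    show ?thesis unfolding Y_def
      by (rule disj_add[OF X0 _ _ a1 a2]) (simp_all add: scaleR_nonneg_nonneg fa_pos[OF F] m0 y'0)
  qed
  have xx: "x * x = m * m + X"
    by (simp add: X_def x'_def algebra_simps scaleR_2 fa_comm[OF F S, of x m])
  have yy: "y * y = m * m + Y"
    by (simp add: Y_def y'_def algebra_simps scaleR_2 fa_comm[OF F S, of y m])
  have "inf (x * x) (y * y) = m * m + inf X Y" by (simp add: xx yy add_inf_l)
  then show ?thesis using \<open>inf X Y = 0\<close> by (simp add: m_def)
qed

lemma riesz_sub:
  fixes u P Q :: "'a::{ordered_real_vector,lattice}"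
  assumes "0 \<le> u" "0 \<le> P" "0 \<le> Q" "u \<le> P + Q" "inf u P = 0"
  shows "u \<le> Q"
proof -
  have "u = inf u (P + Q)" using assms(4) by (simp add: inf.absorb1)
  also have "\<dots> \<le> inf u P + inf u Q" using assms by (intro riesz_ineq) auto
  also have "\<dots> \<le> Q" using assms(5) by simp
  finally show ?thesis .
qed

lemma oc_zero:
  fixes z y :: "'f::{real_algebra,ordered_real_vector,lattice}"
  assumes F: "f_algebra TYPE('f)" and z: "0 \<le> z" and Spos: "\<forall>s\<in>S. 0 \<le> s"
    and glb0: "\<And>w. (\<forall>s\<in>S. w \<le> s) \<Longrightarrow> w \<le> 0" and hy: "\<forall>s\<in>S. y \<le> s * z"
  shows "y \<le> 0"
proof -
  define y' where "y' = pp y"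
  have y'0: "0 \<le> y'" by (simp add: y'_def)
  have hy': "y' \<le> s * z" if s: "s \<in> S" for s
    using hy s fa_pos[OF F _ z, of s] Spos by (simp add: y'_def pp_def)
  have main: "y' \<le> (1 / real m) *\<^sub>R (y' * z)" if m: "1 \<le> m" for m :: nat
  proof -
    define M where "M = real m"
    have M0: "0 < M" using m by (simp add: M_def)
    have lb: "(1 / M) *\<^sub>R (y' - (1 / M) *\<^sub>R (y' * z)) \<le> s" if s: "s \<in> S" for s
    proof -
      have s0: "0 \<le> s" using Spos s by blast
      define d where "d = pp (y' - M *\<^sub>R s)"
      define P where "P = pp (M *\<^sub>R s - y')"
      have d0: "0 \<le> d" and P0: "0 \<le> P" by (simp_all add: d_def P_def)
      have ident: "M *\<^sub>R s = P + inf (M *\<^sub>R s) y'" by (simp add: P_def inf_eq_pp)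
      have Ms0: "0 \<le> M *\<^sub>R s" using M0 s0 by (simp add: scaleR_nonneg_nonneg)
      have Q0: "0 \<le> inf (M *\<^sub>R s) y'" using Ms0 y'0 by simp
      have "M *\<^sub>R y' \<le> M *\<^sub>R (s * z)" using hy'[OF s] M0 by (intro scaleR_left_mono) auto
      also have "\<dots> = (M *\<^sub>R s) * z" by simp
      also have "\<dots> = P * z + inf (M *\<^sub>R s) y' * z" by (subst ident) (simp add: distrib_right)
      finally have a1: "M *\<^sub>R y' \<le> P * z + inf (M *\<^sub>R s) y' * z" .
      have "d \<le> y'"
      proof -
        have "d \<le> pp y'" unfolding d_def using Ms0 by (intro pp_mono) simp
        then show ?thesis using pp_id[OF y'0] by simp
      qed
      then have a2: "M *\<^sub>R d \<le> M *\<^sub>R y'" using M0 by (intro scaleR_left_mono) auto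
      have "inf P d = 0"
      proof -
        have "P = nn (y' - M *\<^sub>R s)" by (simp add: P_def nn_pp)
        then show ?thesis using pp_nn_inf[of "y' - M *\<^sub>R s"] by (simp add: d_def inf_commute)
      qed
      then have "inf (P * z) d = 0" using fa_bp[OF F _ z] by simp
      then have dP: "inf (M *\<^sub>R d) (1 *\<^sub>R (P * z)) = 0"
        using disj_scale[of d "P * z" M 1] d0 fa_pos[OF F P0 z] M0 by (simp add: inf_commute)
      have "M *\<^sub>R d \<le> inf (M *\<^sub>R s) y' * z"
        by (rule riesz_sub[of _ "P * z"]) (use a1 a2 dP d0 M0 fa_pos[OF F P0 z] fa_pos[OF F Q0 z] in \<open>simp_all add: scaleR_nonneg_nonneg\<close>)
      also have "\<dots> \<le> y' * z" by (rule mrm[OF F z]) simp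
      finally have "M *\<^sub>R d \<le> y' * z" .
      then have "d \<le> (1 / M) *\<^sub>R (y' * z)"
        using M0 scaleR_left_mono[of "M *\<^sub>R d" "y' * z" "1 / M"] by simp
      moreover have "y' - M *\<^sub>R s \<le> d" by (simp add: d_def le_pp)
      ultimately have "y' - M *\<^sub>R s \<le> (1 / M) *\<^sub>R (y' * z)" by (rule order.trans[rotated])
      then have "y' - (1 / M) *\<^sub>R (y' * z) \<le> M *\<^sub>R s" by (simp add: diff_le_eq add.commute)
      then have "(1 / M) *\<^sub>R (y' - (1 / M) *\<^sub>R (y' * z)) \<le> (1 / M) *\<^sub>R (M *\<^sub>R s)"
        using M0 by (intro scaleR_left_mono) auto
      then show ?thesis using M0 by simp
    qed
    then have "(1 / M) *\<^sub>R (y' - (1 / M) *\<^sub>R (y' * z)) \<le> 0" using glb0 by blast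
    then have "M *\<^sub>R ((1 / M) *\<^sub>R (y' - (1 / M) *\<^sub>R (y' * z))) \<le> M *\<^sub>R 0"
      using M0 by (intro scaleR_left_mono) auto
    then show ?thesis using M0 by (simp add: M_def)
  qed
  have "y' = 0" by (rule arch_lemma[OF fa_arch[OF F] y'0 main])
  then show ?thesis using le_pp[of y] by (simp add: y'_def)
qed

lemma glb_mult:
  fixes z g :: "'f::{real_algebra,ordered_real_vector,lattice}"
  assumes F: "f_algebra TYPE('f)" and z: "0 \<le> z" and g: "is_glb S g"
  shows "is_glb ((\<lambda>s. s * z) ` S) (g * z)"
  unfolding is_glb_def
proof (intro conjI allI impI ballI)
  fix t assume "t \<in> (\<lambda>s. s * z) ` S"
  then obtain s where s: "s \<in> S" "t = s * z" by blast
  have "g \<le> s" using g s unfolding is_glb_def by blast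
  then show "g * z \<le> t" using s mrm[OF F z] by simp
next
  fix w assume hw: "\<forall>t\<in>(\<lambda>s. s * z) ` S. w \<le> t"
  define S' where "S' = (\<lambda>s. s - g) ` S"
  have Spos: "\<forall>s\<in>S'. 0 \<le> s" using g unfolding S'_def is_glb_def by auto
  have glb0: "w' \<le> 0" if "\<forall>s\<in>S'. w' \<le> s" for w'
  proof -
    have "\<forall>s\<in>S. w' + g \<le> s" using that unfolding S'_def by (auto simp: le_diff_eq)
    then have "w' + g \<le> g" using g unfolding is_glb_def by blast
    then show ?thesis by simp
  qed
  have hy: "\<forall>s\<in>S'. w - g * z \<le> s * z"
    using hw unfolding S'_def by (auto simp: left_diff_distrib)
  have "w - g * z \<le> 0" by (rule oc_zero[OF F z Spos glb0 hy])
  then show "w \<le> g * z" by simp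
qed

lemma glb_unique: "is_glb S a \<Longrightarrow> is_glb S b \<Longrightarrow> a = (b::'a::order)"
  unfolding is_glb_def by (meson order.antisym)

lemma gm_glb:
  fixes u v :: "'f::{real_algebra,ordered_real_vector,lattice}"
  assumes G: "geometric_mean_closed TYPE('f)" and u: "0 \<le> u" and v: "0 \<le> v"
  shows "is_glb (gm_set u v) (2 *\<^sub>R (u \<boxtimes> v))"
proof -
  obtain a where a: "is_glb (gm_set u v) a" using G u v unfolding geometric_mean_closed_def by blast
  have "(THE a. is_glb (gm_set u v) a) = a" using a glb_unique by blast
  then show ?thesis using a by (simp add: gmean_def)
qed

lemma grd_nonneg: "0 \<le> grd x y d N"
  by (induction N) simp_all

lemma disj_sq:
  assumes F: "f_algebra TYPE('f::{real_algebra,ordered_real_vector,lattice})"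
    and x: "0 \<le> (x::'f)" and y: "0 \<le> y" and d: "inf x y = 0"
  shows "inf (x * x) (y * y) = 0"
proof -
  have "inf (x * x) y = 0" using fa_bp[OF F d x] .
  then have "inf y (x * x) = 0" by (simp add: inf_commute)
  then have "inf (y * y) (x * x) = 0" using fa_bp[OF F _ y] by simp
  then show ?thesis by (simp add: inf_commute)
qed

lemma grd_sq_lower:
  fixes e :: "'f::{real_algebra,ordered_real_vector,lattice}"
  assumes F: "f_algebra TYPE('f)" and S: "semiprime TYPE('f)" and c: "0 \<le> c"
    and h: "\<And>k. k \<le> N \<Longrightarrow> e \<le> c *\<^sub>R (aa ((real k * d) *\<^sub>R x - y) * aa ((real k * d) *\<^sub>R x - y))"
  shows "e \<le> c *\<^sub>R (grd x y d N * grd x y d N)"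
  using h
proof (induction N)
  case 0
  then have "e \<le> c *\<^sub>R (aa ((real 0 * d) *\<^sub>R x - y) * aa ((real 0 * d) *\<^sub>R x - y))" by blast
  then show ?case by (simp add: aa_neg)
next
  case (Suc N)
  define G where "G = grd x y d N"
  define A where "A = aa ((real (Suc N) * d) *\<^sub>R x - y)"
  have "e \<le> c *\<^sub>R (G * G)" using Suc.IH Suc.prems by (simp add: G_def)
  moreover have "e \<le> c *\<^sub>R (A * A)" using Suc.prems[of "Suc N"] by (simp add: A_def)
  ultimately have "e \<le> inf (c *\<^sub>R (G * G)) (c *\<^sub>R (A * A))" by simp
  also have "\<dots> = c *\<^sub>R inf (G * G) (A * A)" by (rule scale_inf[OF c, symmetric])
  also have "inf (G * G) (A * A) = inf G A * inf G A"
    by (rule sq_inf[OF F S, symmetric]) (simp_all add: G_def A_def grd_nonneg)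
  finally show ?case by (simp only: grd.simps G_def A_def)
qed

lemma gm_ident:
  assumes F: "f_algebra TYPE('f::{real_algebra,ordered_real_vector,lattice})" and S: "semiprime TYPE('f)"
    and t: "t \<noteq> 0"
  shows "t *\<^sub>R ((a::'f) * a) + inverse t *\<^sub>R (b * b) - 2 *\<^sub>R (a * b) = inverse t *\<^sub>R ((t *\<^sub>R a - b) * (t *\<^sub>R a - b))"
proof -
  have e1: "(t *\<^sub>R a - b) * (t *\<^sub>R a - b) = (t * t) *\<^sub>R (a * a) - t *\<^sub>R (a * b) - t *\<^sub>R (b * a) + b * b"
    by (simp add: algebra_simps)
  have ba: "b * a = a * b" by (rule fa_comm[OF F S])
  have e: "(t *\<^sub>R a - b) * (t *\<^sub>R a - b) = (t * t) *\<^sub>R (a * a) - (2 * t) *\<^sub>R (a * b) + b * b"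
  proof -
    have "(2 * t) *\<^sub>R (a * b) = t *\<^sub>R (a * b) + t *\<^sub>R (a * b)" by (metis mult_2 scaleR_add_left)
    then show ?thesis unfolding e1 ba by (simp add: algebra_simps)
  qed
  show ?thesis unfolding e using t by (simp add: algebra_simps)
qed

lemma gm_sq:
  fixes a b :: "'f::{real_algebra,ordered_real_vector,lattice}"
  assumes F: "f_algebra TYPE('f)" and S: "semiprime TYPE('f)" and a: "0 \<le> a" and b: "0 \<le> b"
  shows "is_glb (gm_set (a * a) (b * b)) (2 *\<^sub>R (a * b))"
  unfolding is_glb_def
proof (intro conjI allI impI ballI)
  fix s assume "s \<in> gm_set (a * a) (b * b)"
  then obtain t where t: "0 < t" "s = t *\<^sub>R (a * a) + inverse t *\<^sub>R (b * b)" unfolding gm_set_def by blast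
  have "0 \<le> inverse t *\<^sub>R ((t *\<^sub>R a - b) * (t *\<^sub>R a - b))"
    using t sq_nonneg[OF F S] by (simp add: scaleR_nonneg_nonneg)
  also have "\<dots> = s - 2 *\<^sub>R (a * b)" using gm_ident[OF F S, of t a b] t by simp
  finally show "2 *\<^sub>R (a * b) \<le> s" by simp
next
  fix w assume hw: "\<forall>s\<in>gm_set (a * a) (b * b). w \<le> s"
  define e where "e = w - 2 *\<^sub>R (a * b)"
  define e' where "e' = pp e"
  have e'0: "0 \<le> e'" by (simp add: e'_def)
  have hyp: "e' \<le> inverse t *\<^sub>R ((t *\<^sub>R a - b) * (t *\<^sub>R a - b))" if t: "0 < t" for t
  proof -
    have "w \<le> t *\<^sub>R (a * a) + inverse t *\<^sub>R (b * b)" using hw t unfolding gm_set_def by blast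
    then have "e \<le> t *\<^sub>R (a * a) + inverse t *\<^sub>R (b * b) - 2 *\<^sub>R (a * b)"
      unfolding e_def by (rule diff_right_mono)
    also have "\<dots> = inverse t *\<^sub>R ((t *\<^sub>R a - b) * (t *\<^sub>R a - b))"
      by (rule gm_ident[OF F S]) (use t in simp)
    finally have "e \<le> inverse t *\<^sub>R ((t *\<^sub>R a - b) * (t *\<^sub>R a - b))" .
    moreover have "0 \<le> inverse t *\<^sub>R ((t *\<^sub>R a - b) * (t *\<^sub>R a - b))"
      using t sq_nonneg[OF F S] by (simp add: scaleR_nonneg_nonneg)
    ultimately show ?thesis by (simp add: e'_def pp_def)
  qed
  have sqa: "0 \<le> a * a" and sqb: "0 \<le> b * b" using sq_nonneg[OF F S] by blast+
  have main: "e' \<le> (1 / real n) *\<^sub>R (8 *\<^sub>R (a * a) + b * b)" if n1: "1 \<le> n" for n :: nat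
  proof -
    define N where "N = real n"
    have N1: "1 \<le> N" using n1 by (simp add: N_def)
    define s0 where "s0 = 1 / N"
    define dl where "dl = 1 / (N * N)"
    define K where "K = n * n * n"
    define St where "St = s0 + N"
    define y0 where "y0 = b - s0 *\<^sub>R a"
    have s00: "0 < s0" and dl0: "0 \<le> dl" using N1 by (simp_all add: s0_def dl_def)
    have KN: "real K * dl = N" using N1 by (simp add: K_def dl_def N_def)
    have St0: "0 < St" using s00 N1 by (simp add: St_def)
    have gridpt: "e' \<le> N *\<^sub>R (aa ((real k * dl) *\<^sub>R a - y0) * aa ((real k * dl) *\<^sub>R a - y0))" for k
    proof -
      define th where "th = s0 + real k * dl"
      have th0: "s0 \<le> th" using dl0 by (simp add: th_def)
      then have thp: "0 < th" using s00 by simp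
      have eq: "(real k * dl) *\<^sub>R a - y0 = th *\<^sub>R a - b" by (simp add: th_def y0_def algebra_simps)
      have "e' \<le> inverse th *\<^sub>R ((th *\<^sub>R a - b) * (th *\<^sub>R a - b))" using hyp[OF thp] .
      also have "\<dots> \<le> N *\<^sub>R ((th *\<^sub>R a - b) * (th *\<^sub>R a - b))"
      proof (rule scaleR_right_mono)
        have "inverse th \<le> inverse s0" using th0 s00 by (simp add: le_imp_inverse_le)
        then show "inverse th \<le> N" using N1 by (simp add: s0_def)
      qed (rule sq_nonneg[OF F S])
      also have "(th *\<^sub>R a - b) * (th *\<^sub>R a - b) = aa (th *\<^sub>R a - b) * aa (th *\<^sub>R a - b)"
        by (rule sq_expand(2)[OF F S, symmetric])
      finally show ?thesis unfolding eq .
    qed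
    have N0: "0 \<le> N" using N1 by simp
    have g1: "e' \<le> N *\<^sub>R (grd a y0 dl K * grd a y0 dl K)"
      by (rule grd_sq_lower[OF F S N0]) (rule gridpt)
    define al where "al = (dl + s0) *\<^sub>R a"
    define be where "be = pp (b - St *\<^sub>R a)"
    have al0: "0 \<le> al" using a dl0 s00 by (simp add: al_def scaleR_nonneg_nonneg)
    have be0: "0 \<le> be" by (simp add: be_def)
    have gb: "grd a y0 dl K \<le> al + be"
    proof -
      have "grd a y0 dl K \<le> dl *\<^sub>R a + nn y0 + pp (y0 - (real K * dl) *\<^sub>R a)"
        by (rule grd_bound[OF a dl0])
      also have "y0 - (real K * dl) *\<^sub>R a = b - St *\<^sub>R a"
        unfolding KN by (simp add: y0_def St_def algebra_simps)
      also have "nn y0 \<le> s0 *\<^sub>R a"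
      proof -
        have "0 \<le> s0 *\<^sub>R a" using s00 a by (simp add: scaleR_nonneg_nonneg)
        moreover have "- y0 \<le> s0 *\<^sub>R a" using b by (simp add: y0_def)
        ultimately show ?thesis by (simp add: nn_def)
      qed
      finally show ?thesis by (simp add: al_def be_def scaleR_add_left add_ac)
    qed
    have "grd a y0 dl K * grd a y0 dl K \<le> (al + be) * (al + be)"
      by (rule sq_mono[OF F grd_nonneg gb])
    also have "\<dots> \<le> 2 *\<^sub>R (al * al) + 2 *\<^sub>R (be * be)"
    proof -
      have "(al + be) * (al + be) = al * al + be * be + 2 *\<^sub>R (al * be)"
        by (simp add: algebra_simps scaleR_2 fa_comm[OF F S, of be al])
      also have "\<dots> \<le> al * al + be * be + (al * al + be * be)"
        using two_prod_le[OF F S, of al be] by simp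
      finally show ?thesis by (simp add: scaleR_2 add_ac)
    qed
    finally have g2: "grd a y0 dl K * grd a y0 dl K \<le> 2 *\<^sub>R (al * al) + 2 *\<^sub>R (be * be)" .
    have X: "e' \<le> (2 * N) *\<^sub>R (al * al) + (2 * N) *\<^sub>R (be * be)"
    proof -
      have "e' \<le> N *\<^sub>R (2 *\<^sub>R (al * al) + 2 *\<^sub>R (be * be))"
        using g1 scaleR_left_mono[OF g2 N0] by (rule order.trans)
      then show ?thesis by (simp add: scaleR_add_right mult.commute)
    qed
    define r where "r = St *\<^sub>R a - b"
    have Y: "e' \<le> inverse St *\<^sub>R (pp r * pp r) + inverse St *\<^sub>R (be * be)"
    proof -
      have "e' \<le> inverse St *\<^sub>R (r * r)" using hyp[OF St0] by (simp add: r_def)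
      also have "r * r = pp r * pp r + nn r * nn r" by (rule sq_expand(1)[OF F S])
      also have "nn r = be" by (simp add: r_def be_def nn_pp)
      finally show ?thesis by (simp add: scaleR_add_right)
    qed
    have invSt: "inverse St \<le> 1 / N"
    proof -
      have "N \<le> St" using s00 by (simp add: St_def)
      then have "inverse St \<le> inverse N" using N1 by (intro le_imp_inverse_le) simp_all
      then show ?thesis by (simp add: inverse_eq_divide)
    qed
    have "e' \<le> inf ((2 * N) *\<^sub>R (be * be) + (2 * N) *\<^sub>R (al * al))
                  (inverse St *\<^sub>R (be * be) + inverse St *\<^sub>R (pp r * pp r))"
      using X Y by (simp add: add.commute)
    also have "\<dots> \<le> inf ((2 * N) *\<^sub>R (be * be)) (inverse St *\<^sub>R (be * be) + inverse St *\<^sub>R (pp r * pp r))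
                    + (2 * N) *\<^sub>R (al * al)"
      by (rule inf_add_le) (use N0 al0 fa_pos[OF F al0 al0] in \<open>simp add: scaleR_nonneg_nonneg\<close>)
    also have "inf ((2 * N) *\<^sub>R (be * be)) (inverse St *\<^sub>R (be * be) + inverse St *\<^sub>R (pp r * pp r))
             \<le> inverse St *\<^sub>R (be * be)"
    proof -
      have "inf ((2 * N) *\<^sub>R (be * be)) (inverse St *\<^sub>R (pp r * pp r) + inverse St *\<^sub>R (be * be))
          \<le> inf ((2 * N) *\<^sub>R (be * be)) (inverse St *\<^sub>R (pp r * pp r)) + inverse St *\<^sub>R (be * be)"
        using inf_add_le[of "inverse St *\<^sub>R (be * be)" "inverse St *\<^sub>R (pp r * pp r)" "(2 * N) *\<^sub>R (be * be)"]
          St0 fa_pos[OF F be0 be0] by (simp add: inf_commute scaleR_nonneg_nonneg)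
      moreover have "inf ((2 * N) *\<^sub>R (be * be)) (inverse St *\<^sub>R (pp r * pp r)) = 0"
      proof -
        have "inf (be * be) (pp r * pp r) = 0"
        proof (rule disj_sq[OF F be0 pp_ge0])
          have "be = nn r" by (simp add: be_def r_def nn_pp)
          then show "inf be (pp r) = 0" using pp_nn_inf[of r] by (simp add: inf_commute)
        qed
        then show ?thesis using N0 St0 fa_pos[OF F be0 be0] fa_pos[OF F pp_ge0 pp_ge0, of r r]
          by (intro disj_scale) simp_all
      qed
      ultimately show ?thesis by (simp add: add.commute)
    qed
    also have "inverse St *\<^sub>R (be * be) \<le> (1 / N) *\<^sub>R (b * b)"
    proof -
      have "be \<le> b"
      proof -
        have "be \<le> pp b" unfolding be_def using St0 a by (intro pp_mono) (simp add: scaleR_nonneg_nonneg)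
        then show ?thesis using pp_id[OF b] by simp
      qed
      then have "be * be \<le> b * b" by (rule sq_mono[OF F be0])
      then have "inverse St *\<^sub>R (be * be) \<le> inverse St *\<^sub>R (b * b)" using St0 by (intro scaleR_left_mono) simp_all
      also have "\<dots> \<le> (1 / N) *\<^sub>R (b * b)" using invSt sqb by (rule scaleR_right_mono)
      finally show ?thesis .
    qed
    also have "(2 * N) *\<^sub>R (al * al) \<le> (1 / N) *\<^sub>R (8 *\<^sub>R (a * a))"
    proof -
      have "al * al = ((dl + s0) * (dl + s0)) *\<^sub>R (a * a)" by (simp add: al_def)
      then have "(2 * N) *\<^sub>R (al * al) = (2 * N * ((dl + s0) * (dl + s0))) *\<^sub>R (a * a)" by simp
      also have "\<dots> \<le> (8 / N) *\<^sub>R (a * a)"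
      proof (rule scaleR_right_mono[OF _ sqa])
        have "dl \<le> s0" using N1 by (simp add: dl_def s0_def field_simps)
        then have "dl + s0 \<le> 2 / N" by (simp add: s0_def)
        moreover have "0 \<le> dl + s0" using dl0 s00 by simp
        ultimately have "(dl + s0) * (dl + s0) \<le> (2 / N) * (2 / N)" using N0 by (intro mult_mono) simp_all
        then have "2 * N * ((dl + s0) * (dl + s0)) \<le> 2 * N * ((2 / N) * (2 / N))" using N0 by (intro mult_left_mono) simp_all
        also have "\<dots> = 8 / N" using N1 by (simp add: field_simps)
        finally show "2 * N * ((dl + s0) * (dl + s0)) \<le> 8 / N" .
      qed
      also have "\<dots> = (1 / N) *\<^sub>R (8 *\<^sub>R (a * a))" by simp
      finally show ?thesis .
    qed
    finally show ?thesis by (simp add: N_def scaleR_add_right add.commute)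
  qed
  have "e' = 0" by (rule arch_lemma[OF fa_arch[OF F] e'0 main])
  then have "e \<le> 0" using le_pp[of e] by (simp add: e'_def)
  then show "w \<le> 2 *\<^sub>R (a * b)" by (simp add: e_def)
qed

lemma real_amgm2: "0 < (p::real) \<Longrightarrow> 0 < q \<Longrightarrow> 2 \<le> p * inverse q + q * inverse p"
proof -
  assume p: "0 < p" and q: "0 < q"
  have "0 \<le> (p - q) * (p - q)" by simp
  then have "2 * p * q \<le> p * p + q * q" by (simp add: algebra_simps)
  then have "2 * p * q / (p * q) \<le> (p * p + q * q) / (p * q)" using p q by (intro divide_right_mono) simp_all
  then show ?thesis using p q by (simp add: field_simps)
qed

lemma four_two: "(4::real) *\<^sub>R x = 2 *\<^sub>R x + 2 *\<^sub>R (x::'a::real_vector)"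
proof -
  have "(4::real) = 2 + 2" by simp
  then show ?thesis by (metis scaleR_add_left)
qed

lemma prod_expand:
  assumes F: "f_algebra TYPE('f::{real_algebra,ordered_real_vector,lattice})" and S: "semiprime TYPE('f)"
  shows "(p *\<^sub>R (a::'f) + q *\<^sub>R b) * (r *\<^sub>R a + t *\<^sub>R b)
       = (p * r) *\<^sub>R (a * a) + (p * t + q * r) *\<^sub>R (a * b) + (q * t) *\<^sub>R (b * b)"
proof -
  have ba: "b * a = a * b" by (rule fa_comm[OF F S])
  show ?thesis by (simp add: algebra_simps ba scaleR_add_left)
qed

lemma gm_nonneg:
  fixes a b :: "'f::{real_algebra,ordered_real_vector,lattice}"
  assumes G: "geometric_mean_closed TYPE('f)" and a: "0 \<le> a" and b: "0 \<le> b"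
  shows "0 \<le> a \<boxtimes> b"
proof -
  have g: "is_glb (gm_set a b) (2 *\<^sub>R (a \<boxtimes> b))" by (rule gm_glb[OF G a b])
  have "\<forall>s\<in>gm_set a b. 0 \<le> s" using a b unfolding gm_set_def
    by (auto intro!: add_nonneg_nonneg scaleR_nonneg_nonneg)
  then have "0 \<le> 2 *\<^sub>R (a \<boxtimes> b)" using g unfolding is_glb_def by blast
  then show ?thesis by (simp add: scaleR_nonneg_nonneg zero_le_scaleR_iff)
qed

lemma gm_square:
  fixes a b :: "'f::{real_algebra,ordered_real_vector,lattice}"
  assumes F: "f_algebra TYPE('f)" and S: "semiprime TYPE('f)" and G: "geometric_mean_closed TYPE('f)"
    and a: "0 \<le> a" and b: "0 \<le> b"
  shows "(a \<boxtimes> b) * (a \<boxtimes> b) = a * b"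
proof -
  define g where "g = 2 *\<^sub>R (a \<boxtimes> b)"
  have g: "is_glb (gm_set a b) g" unfolding g_def by (rule gm_glb[OF G a b])
  have g0: "0 \<le> g" using gm_nonneg[OF G a b] by (simp add: g_def scaleR_nonneg_nonneg)
  have ab0: "0 \<le> a * b" by (rule fa_pos[OF F a b])
  have gs: "g \<le> s" if "s \<in> gm_set a b" for s using g that unfolding is_glb_def by blast
  have s0: "0 \<le> s" if "s \<in> gm_set a b" for s
    using that a b unfolding gm_set_def by (auto intro!: add_nonneg_nonneg scaleR_nonneg_nonneg)
  have up: "g * g \<le> 4 *\<^sub>R (a * b)"
  proof -
    have lb: "g * g - 2 *\<^sub>R (a * b) \<le> s" if s: "s \<in> gm_set (a * a) (b * b)" for s
    proof -
      obtain ph where ph: "0 < ph" "s = ph *\<^sub>R (a * a) + inverse ph *\<^sub>R (b * b)"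
        using s unfolding gm_set_def by blast
      define th where "th = sqrt ph"
      have th: "0 < th" "th * th = ph" using ph by (simp_all add: th_def)
      have mem: "th *\<^sub>R a + inverse th *\<^sub>R b \<in> gm_set a b" using th unfolding gm_set_def by blast
      have "g * g \<le> (th *\<^sub>R a + inverse th *\<^sub>R b) * (th *\<^sub>R a + inverse th *\<^sub>R b)"
        by (rule sq_mono[OF F g0 gs[OF mem]])
      also have "\<dots> = ph *\<^sub>R (a * a) + 2 *\<^sub>R (a * b) + inverse ph *\<^sub>R (b * b)"
        using th by (simp add: prod_expand[OF F S] field_simps)
      finally show ?thesis using ph by (simp add: algebra_simps)
    qed
    have "g * g - 2 *\<^sub>R (a * b) \<le> 2 *\<^sub>R (a * b)"
      using gm_sq[OF F S a b] lb unfolding is_glb_def by blast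
    then show ?thesis by (simp add: four_two diff_le_eq)
  qed
  have lo: "4 *\<^sub>R (a * b) \<le> g * g"
  proof -
    have "is_glb ((\<lambda>s. s * g) ` gm_set a b) (g * g)" by (rule glb_mult[OF F g0 g])
    moreover have "4 *\<^sub>R (a * b) \<le> s * g" if s: "s \<in> gm_set a b" for s
    proof -
      have "is_glb ((\<lambda>t. t * s) ` gm_set a b) (g * s)" by (rule glb_mult[OF F s0[OF s] g])
      moreover have "4 *\<^sub>R (a * b) \<le> t * s" if t: "t \<in> gm_set a b" for t
      proof -
        obtain th where th: "0 < th" "s = th *\<^sub>R a + inverse th *\<^sub>R b" using s unfolding gm_set_def by blast
        obtain ph where ph: "0 < ph" "t = ph *\<^sub>R a + inverse ph *\<^sub>R b" using t unfolding gm_set_def by blast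
        have e: "t * s = (ph * th) *\<^sub>R (a * a) + (ph * inverse th + inverse ph * th) *\<^sub>R (a * b)
                  + inverse (ph * th) *\<^sub>R (b * b)"
          using th ph by (simp add: prod_expand[OF F S] mult.commute)
        have m: "(ph * th) *\<^sub>R (a * a) + inverse (ph * th) *\<^sub>R (b * b) \<in> gm_set (a * a) (b * b)"
          using th ph unfolding gm_set_def by (intro CollectI exI[of _ "ph * th"]) simp
        have 1: "2 *\<^sub>R (a * b) \<le> (ph * th) *\<^sub>R (a * a) + inverse (ph * th) *\<^sub>R (b * b)"
          using gm_sq[OF F S a b] m unfolding is_glb_def by blast
        have 2: "2 *\<^sub>R (a * b) \<le> (ph * inverse th + inverse ph * th) *\<^sub>R (a * b)"
          using real_amgm2[OF ph(1) th(1)] ab0 by (intro scaleR_right_mono) (simp_all add: mult.commute)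
        have "4 *\<^sub>R (a * b) = 2 *\<^sub>R (a * b) + 2 *\<^sub>R (a * b)" by (rule four_two)
        also have "\<dots> \<le> ((ph * th) *\<^sub>R (a * a) + inverse (ph * th) *\<^sub>R (b * b)) + (ph * inverse th + inverse ph * th) *\<^sub>R (a * b)"
          using 1 2 by (rule add_mono)
        also have "\<dots> = t * s" unfolding e by (simp add: algebra_simps)
        finally show ?thesis .
      qed
      ultimately have "4 *\<^sub>R (a * b) \<le> g * s" unfolding is_glb_def by blast
      then show ?thesis by (simp add: fa_comm[OF F S, of g s])
    qed
    ultimately show ?thesis unfolding is_glb_def by blast
  qed
  have "g * g = 4 *\<^sub>R (a * b)" using up lo by (rule order.antisym)
  then have "4 *\<^sub>R ((a \<boxtimes> b) * (a \<boxtimes> b)) = 4 *\<^sub>R (a * b)" by (simp add: g_def)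
  then show ?thesis by simp
qed

lemma vsi_bil: "vector_semi_inner T \<Longrightarrow> bilinear T" by (simp add: vector_semi_inner_def)
lemma vsi_sym: "vector_semi_inner T \<Longrightarrow> T x y = T y x" by (simp add: vector_semi_inner_def)
lemma vsi_pos: "vector_semi_inner T \<Longrightarrow> 0 \<le> T x x" by (simp add: vector_semi_inner_def)

lemma T_sum:
  fixes T :: "'v::real_vector \<Rightarrow> 'v \<Rightarrow> 'f::{real_algebra,ordered_real_vector,lattice}"
  assumes V: "vector_semi_inner T"
  shows "T (x + y) (x + y) = T x x + 2 *\<^sub>R T x y + T y y"
proof -
  have B: "bilinear T" by (rule vsi_bil[OF V])
  have "T (x + y) (x + y) = T x x + T x y + T y x + T y y"
    by (simp add: bilinear_ladd[OF B] bilinear_radd[OF B] add_ac)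
  then show ?thesis by (simp add: vsi_sym[OF V, of y x] scaleR_2 add_ac)
qed

lemma T_lin:
  fixes T :: "'v::real_vector \<Rightarrow> 'v \<Rightarrow> 'f::{real_algebra,ordered_real_vector,lattice}"
  assumes V: "vector_semi_inner T"
  shows "T (l *\<^sub>R x - y) (l *\<^sub>R x - y) = (l * l) *\<^sub>R T x x - (2 * l) *\<^sub>R T x y + T y y"
proof -
  have B: "bilinear T" by (rule vsi_bil[OF V])
  have "T (l *\<^sub>R x - y) (l *\<^sub>R x - y) = (l * l) *\<^sub>R T x x - l *\<^sub>R T x y - l *\<^sub>R T y x + T y y"
    by (simp add: bilinear_lsub[OF B] bilinear_rsub[OF B] bilinear_lmul[OF B] bilinear_rmul[OF B] algebra_simps)
  also have "T y x = T x y" by (rule vsi_sym[OF V])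
  finally show ?thesis
  proof -
    assume h: "T (l *\<^sub>R x - y) (l *\<^sub>R x - y) = (l * l) *\<^sub>R T x x - l *\<^sub>R T x y - l *\<^sub>R T x y + T y y"
    have "(2 * l) *\<^sub>R T x y = l *\<^sub>R T x y + l *\<^sub>R T x y" by (metis mult_2 scaleR_add_left)
    then show ?thesis using h by (simp add: algebra_simps)
  qed
qed

lemma inf_pm: "inf (g - x) (g + x) = g - aa (x::'a::{ordered_real_vector,lattice})"
proof -
  have "inf (g - x) (g + x) = g + inf (- x) x" by (simp add: add_inf_l[symmetric] diff_conv_add_uminus del: add_uminus_conv_diff)
  also have "inf (- x) x = - sup x (- x)" by (simp add: neg_sup inf_commute)
  finally show ?thesis by (simp add: aa_def)
qed

theorem theorem3p5:
  fixes T :: "'v::real_vector \<Rightarrow> 'v \<Rightarrow> 'f::{real_algebra, ordered_real_vector, lattice}"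
    and u :: 'f and x y :: 'v
  assumes "f_algebra TYPE('f)" and "semiprime TYPE('f)"
    and "geometric_mean_closed TYPE('f)"
    and "vector_semi_inner T" and "0 \<le> u"
  shows "\<exists>m. is_glb {inverse \<bar>l\<bar> *\<^sub>R (Tnorm T u (l *\<^sub>R x - y) * Tnorm T u (l *\<^sub>R x - y)) | l::real. l \<noteq> 0} m
      \<and> Tnorm T u (x + y) * Tnorm T u (x + y)
          \<le> (Tnorm T u x + Tnorm T u y) * (Tnorm T u x + Tnorm T u y) - m
      \<and> (Tnorm T u x + Tnorm T u y) * (Tnorm T u x + Tnorm T u y) - m
          \<le> (Tnorm T u x + Tnorm T u y) * (Tnorm T u x + Tnorm T u y)
      \<and> (Tnorm T u (x + y) * Tnorm T u (x + y)
          = (Tnorm T u x + Tnorm T u y) * (Tnorm T u x + Tnorm T u y) - m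
         \<longleftrightarrow> 0 \<le> T x y * u)"
proof -
  note F = assms(1) and S = assms(2) and G = assms(3) and V = assms(4) and u0 = assms(5)
  define N where "N z = Tnorm T u z" for z
  have NN: "N z * N z = T z z * u" for z
    unfolding N_def Tnorm_def by (rule gm_square[OF F S G vsi_pos[OF V] u0])
  have N0: "0 \<le> N z" for z
    unfolding N_def Tnorm_def by (rule gm_nonneg[OF G vsi_pos[OF V] u0])
  define A where "A = T x x * u"
  define B where "B = T y y * u"
  define C where "C = T x y * u"
  define P where "P = N x"
  define Q where "Q = N y"
  have PP: "P * P = A" and QQ: "Q * Q = B" by (simp_all add: P_def Q_def A_def B_def NN)
  define g where "g = 2 *\<^sub>R (P * Q)"
  have gglb: "is_glb (gm_set A B) g"
    using gm_sq[OF F S N0[of x] N0[of y]] by (simp add: g_def PP[symmetric] QQ[symmetric] P_def Q_def)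
  have gle: "g \<le> t *\<^sub>R A + inverse t *\<^sub>R B" if "0 < t" for t
    using gglb that unfolding is_glb_def gm_set_def by blast
  define m where "m = g - 2 *\<^sub>R aa C"
  define Sset where "Sset = {inverse \<bar>l\<bar> *\<^sub>R (N (l *\<^sub>R x - y) * N (l *\<^sub>R x - y)) | l::real. l \<noteq> 0}"
  have elem: "inverse \<bar>l\<bar> *\<^sub>R (N (l *\<^sub>R x - y) * N (l *\<^sub>R x - y))
      = inverse \<bar>l\<bar> *\<^sub>R ((l * l) *\<^sub>R A - (2 * l) *\<^sub>R C + B)" for l
    by (simp add: NN T_lin[OF V] A_def B_def C_def algebra_simps)
  have elp: "inverse \<bar>l\<bar> *\<^sub>R (N (l *\<^sub>R x - y) * N (l *\<^sub>R x - y)) = l *\<^sub>R A + inverse l *\<^sub>R B - 2 *\<^sub>R C"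
    if l: "0 < l" for l
    using l unfolding elem by (simp add: scaleR_add_right scaleR_diff_right field_simps)
  have eln: "inverse \<bar>l\<bar> *\<^sub>R (N (l *\<^sub>R x - y) * N (l *\<^sub>R x - y)) = (- l) *\<^sub>R A + inverse (- l) *\<^sub>R B + 2 *\<^sub>R C"
    if l: "l < 0" for l
    using l unfolding elem by (simp add: scaleR_add_right scaleR_diff_right field_simps)
  have aC: "C \<le> aa C" "- C \<le> aa C" by (simp_all add: le_aa neg_le_aa)
  have glb: "is_glb Sset m"
    unfolding is_glb_def
  proof (intro conjI allI impI ballI)
    fix z assume "z \<in> Sset"
    then obtain l where l: "l \<noteq> 0" "z = inverse \<bar>l\<bar> *\<^sub>R (N (l *\<^sub>R x - y) * N (l *\<^sub>R x - y))"
      unfolding Sset_def by blast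
    show "m \<le> z"
    proof (cases "0 < l")
      case True
      have "m \<le> (l *\<^sub>R A + inverse l *\<^sub>R B) - 2 *\<^sub>R C"
        unfolding m_def using gle[OF True] scaleR_left_mono[OF aC(1), of 2]
        by (intro diff_mono) simp_all
      then show ?thesis using elp[OF True] l by simp
    next
      case False
      then have ln: "l < 0" using l by simp
      have "- (2 *\<^sub>R C) \<le> 2 *\<^sub>R aa C" using scaleR_left_mono[OF aC(2), of 2] by simp
      have "m \<le> ((- l) *\<^sub>R A + inverse (- l) *\<^sub>R B) - (- (2 *\<^sub>R C))"
        unfolding m_def using gle[of "- l"] ln \<open>- (2 *\<^sub>R C) \<le> 2 *\<^sub>R aa C\<close> by (intro diff_mono) simp_all
      then have "m \<le> ((- l) *\<^sub>R A + inverse (- l) *\<^sub>R B) + 2 *\<^sub>R C" by simp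
      then show ?thesis using eln[OF ln] l by simp
    qed
  next
    fix w assume hw: "\<forall>z\<in>Sset. w \<le> z"
    have w1: "w + 2 *\<^sub>R C \<le> g"
    proof -
      have "\<forall>s\<in>gm_set A B. w + 2 *\<^sub>R C \<le> s"
      proof
        fix s assume "s \<in> gm_set A B"
        then obtain t where t: "0 < t" "s = t *\<^sub>R A + inverse t *\<^sub>R B" unfolding gm_set_def by blast
        have "inverse \<bar>t\<bar> *\<^sub>R (N (t *\<^sub>R x - y) * N (t *\<^sub>R x - y)) \<in> Sset"
          unfolding Sset_def using t by blast
        then have "w \<le> t *\<^sub>R A + inverse t *\<^sub>R B - 2 *\<^sub>R C" using hw elp[OF t(1)] by metis
        then show "w + 2 *\<^sub>R C \<le> s" using t by (simp add: le_diff_eq)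
      qed
      then show ?thesis using gglb unfolding is_glb_def by blast
    qed
    have w2: "w - 2 *\<^sub>R C \<le> g"
    proof -
      have "\<forall>s\<in>gm_set A B. w - 2 *\<^sub>R C \<le> s"
      proof
        fix s assume "s \<in> gm_set A B"
        then obtain t where t: "0 < t" "s = t *\<^sub>R A + inverse t *\<^sub>R B" unfolding gm_set_def by blast
        have tn: "- t < 0" using t by simp
        have "inverse \<bar>- t\<bar> *\<^sub>R (N ((- t) *\<^sub>R x - y) * N ((- t) *\<^sub>R x - y)) \<in> Sset"
          unfolding Sset_def using t by (intro CollectI exI[of _ "- t"]) simp
        then have "w \<le> (- (- t)) *\<^sub>R A + inverse (- (- t)) *\<^sub>R B + 2 *\<^sub>R C" using hw eln[OF tn] by metis
        then show "w - 2 *\<^sub>R C \<le> s" using t by (simp add: diff_le_eq)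
      qed
      then show ?thesis using gglb unfolding is_glb_def by blast
    qed
    have "w \<le> inf (g - 2 *\<^sub>R C) (g + 2 *\<^sub>R C)"
      using w1 w2 by (simp add: le_diff_eq diff_le_eq)
    also have "\<dots> = g - aa (2 *\<^sub>R C)" by (rule inf_pm)
    also have "\<dots> = m" by (simp add: m_def aa_scale_pos)
    finally show "w \<le> m" .
  qed
  have m0: "0 \<le> m"
  proof -
    have "\<forall>z\<in>Sset. 0 \<le> z"
      unfolding Sset_def by (auto intro!: scaleR_nonneg_nonneg fa_pos[OF F N0 N0])
    then show ?thesis using glb unfolding is_glb_def by blast
  qed
  have sumsq: "(P + Q) * (P + Q) = A + B + g"
  proof -
    have "(P + Q) * (P + Q) = P * P + Q * Q + (P * Q + Q * P)" by (simp add: algebra_simps)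
    also have "Q * P = P * Q" by (rule fa_comm[OF F S])
    finally show ?thesis by (simp add: PP QQ g_def scaleR_2)
  qed
  have nxy: "N (x + y) * N (x + y) = A + B + 2 *\<^sub>R C"
    by (simp add: NN T_sum[OF V] A_def B_def C_def algebra_simps)
  have diff: "(P + Q) * (P + Q) - m = A + B + 2 *\<^sub>R aa C" by (simp add: sumsq m_def)
  have c1: "N (x + y) * N (x + y) \<le> (P + Q) * (P + Q) - m"
    unfolding nxy diff using scaleR_left_mono[OF aC(1), of 2] by simp
  have c2: "(P + Q) * (P + Q) - m \<le> (P + Q) * (P + Q)" using m0 by simp
  have c3: "N (x + y) * N (x + y) = (P + Q) * (P + Q) - m \<longleftrightarrow> 0 \<le> C"
  proof
    assume "N (x + y) * N (x + y) = (P + Q) * (P + Q) - m"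
    then have "2 *\<^sub>R C = 2 *\<^sub>R aa C" unfolding nxy diff by simp
    then have "C = aa C" by simp
    then show "0 \<le> C" using aa_ge0[of C] by simp
  next
    assume "0 \<le> C"
    then show "N (x + y) * N (x + y) = (P + Q) * (P + Q) - m" unfolding nxy diff by (simp add: aa_id)
  qed
  have "is_glb {inverse \<bar>l\<bar> *\<^sub>R (Tnorm T u (l *\<^sub>R x - y) * Tnorm T u (l *\<^sub>R x - y)) | l::real. l \<noteq> 0} m"
    using glb by (simp add: Sset_def N_def)
  then show ?thesis using c1 c2 c3 by (intro exI[of _ m]) (simp add: N_def P_def Q_def C_def)
qed

end
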